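(* Let $\tilde{\mathcal S}(\mathbb C^n)$ be the space of endomorphisms of $\mathcal P(\mathbb C^n)$ spanned by the $\tilde\rho_{\alpha\beta}$, $\alpha,\beta\in\mathbb N^n$. The elements of $\tilde{\mathcal S}(\mathbb C^n)$ preserve the subspace $\mathcal D(\mathbb C^n)=\mathbb C[\bar z_1,\dots,\bar z_n]$ of $\mathcal P(\mathbb C^n)$. Furthermore the restriction map $\mathrm{res}:\tilde{\mathcal S}(\mathbb C^n)\to\mathrm{End}(\mathcal D(\mathbb C^n))$ is injective, with image $\mathcal S(\mathbb C^n)$, and $\mathrm{res}(\tilde\rho_{\alpha\beta})=\rho_{\alpha\beta}$.
   Context: $\mathcal P(\mathbb C^n)$ is the space of polynomial maps $\mathbb C^n\to\mathbb C$ with inner product $\langle f,g\rangle=(2\pi)^{-n}\int e^{-|z|^2}f\bar g\,d\mu_n$ ($\mu_n=\prod|dz_id\bar z_i|$). $a_i=\partial_{\bar z_i}$, $a_i^*=\bar z_i-\partial_{z_i}$; $\tilde\rho_{00}$ is the orthogonal projector onto $\mathbb C[z_1,\dots,z_n]$, and $\tilde\rho_{\alpha\beta}=(\alpha!\beta!)^{-1/2}(a^* )^\alpha\tilde\rho_{00}a^\beta$ (multi-index notation). $\mathcal S(\mathbb C^n)$ is the space of endomorphisms $s$ of $\mathcal D(\mathbb C^n)$ with $s(\bar z^\alpha)=0$ for all but finitely many $\alpha$; $\rho_{\alpha\beta}\in\mathcal S(\mathbb C^n)$ is defined by $\rho_{\alpha\beta}((\beta!)^{-1/2}\bar z^\beta)=(\alpha!)^{-1/2}\bar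 z^\alpha$ and $\rho_{\alpha\beta}(\bar z^\gamma)=0$ for $\gamma\ne\beta$. *)

theory Defs
  imports "HOL-Analysis.Analysis" "HOL-Library.FuncSet"
begin

text \<open>Polynomials in z_1..z_n and their conjugates, represented by their coefficient
  functions on exponent pairs (alpha, beta) (monomial z^alpha zbar^beta), with finite support.
  The dimension n is the cardinality of the finite index type 'n.\<close>

type_synonym 'n mexp = "('n \<Rightarrow> nat) \<times> ('n \<Rightarrow> nat)"
type_synonym 'n pol = "'n mexp \<Rightarrow> complex"

definition Pspace :: "('n::finite) pol set" where
  "Pspace = {f. finite {m. f m \<noteq> 0}}"

definition Hol :: "('n::finite) pol set" where
  "Hol = {f \<in> Pspace. \<forall>m. f m \<noteq> 0 \<longrightarrow> snd m = (\<lambda>i. 0)}"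

definition Dsp :: "('n::finite) pol set" where
  "Dsp = {f \<in> Pspace. \<forall>m. f m \<noteq> 0 \<longrightarrow> fst m = (\<lambda>i. 0)}"

definition peval :: "('n::finite) pol \<Rightarrow> complex ^ 'n \<Rightarrow> complex" where
  "peval f z = (\<Sum>m\<in>{m. f m \<noteq> 0}. f m *
      (\<Prod>i\<in>UNIV. (z $ i) ^ (fst m i) * (cnj (z $ i)) ^ (snd m i)))"

text \<open>Inner product (2 pi)^(-n) int e^(-|z|^2) f conj(g) d mu_n, where
  mu_n = prod |dz_i dzbar_i| = 2^n times Lebesgue measure on C^n = R^(2n).\<close>
definition pinner :: "('n::finite) pol \<Rightarrow> 'n pol \<Rightarrow> complex" where
  "pinner f g = complex_of_real ((2::real) ^ CARD('n) / (2 * pi) ^ CARD('n)) *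
     integral\<^sup>L lborel (\<lambda>z::complex ^ 'n.
        complex_of_real (exp (- (norm z)\<^sup>2)) * peval f z * cnj (peval g z))"

definition rho00t :: "('n::finite) pol \<Rightarrow> 'n pol" where
  "rho00t f = (THE h. h \<in> Hol \<and> (\<forall>g\<in>Hol. pinner (\<lambda>m. f m - h m) g = 0))"

definition dbar :: "'n \<Rightarrow> ('n::finite) pol \<Rightarrow> 'n pol" where
  "dbar i f = (\<lambda>(\<alpha>, \<beta>). of_nat (\<beta> i + 1) * f (\<alpha>, \<beta>(i := \<beta> i + 1)))"

definition dz :: "'n \<Rightarrow> ('n::finite) pol \<Rightarrow> 'n pol" where
  "dz i f = (\<lambda>(\<alpha>, \<beta>). of_nat (\<alpha> i + 1) * f (\<alpha>(i := \<alpha> i + 1), \<beta>))"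

definition mulzbar :: "'n \<Rightarrow> ('n::finite) pol \<Rightarrow> 'n pol" where
  "mulzbar i f = (\<lambda>(\<alpha>, \<beta>). if \<beta> i = 0 then 0 else f (\<alpha>, \<beta>(i := \<beta> i - 1)))"

definition astar :: "'n \<Rightarrow> ('n::finite) pol \<Rightarrow> 'n pol" where
  "astar i f = (\<lambda>m. mulzbar i f m - dz i f m)"

text \<open>Multi-index power A^alpha = prod_i (A_i)^(alpha_i) (the A_i commute here).\<close>
definition opow :: "('n \<Rightarrow> ('n::finite) pol \<Rightarrow> 'n pol) \<Rightarrow> ('n \<Rightarrow> nat) \<Rightarrow> 'n pol \<Rightarrow> 'n pol" where
  "opow A \<alpha> = foldr (\<lambda>i g. (A i ^^ \<alpha> i) \<circ> g) (SOME xs. distinct xs \<and> set xs = UNIV) id"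

definition mfact :: "('n::finite \<Rightarrow> nat) \<Rightarrow> real" where
  "mfact \<alpha> = (\<Prod>i\<in>UNIV. fact (\<alpha> i))"

definition rhot :: "('n::finite \<Rightarrow> nat) \<Rightarrow> ('n \<Rightarrow> nat) \<Rightarrow> 'n pol \<Rightarrow> 'n pol" where
  "rhot \<alpha> \<beta> f = (\<lambda>m. complex_of_real (1 / sqrt (mfact \<alpha> * mfact \<beta>)) *
      opow astar \<alpha> (rho00t (opow dbar \<beta> f)) m)"

text \<open>Endomorphisms of P(C^n) are represented as functions restricted to Pspace.
  Stilde = linear span of the rhot alpha beta.\<close>
definition Stilde :: "(('n::finite) pol \<Rightarrow> 'n pol) set" where
  "Stilde = {restrict (\<lambda>f m. \<Sum>p\<in>F. c p * rhot (fst p) (snd p) f m) Pspace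
              | F c. finite F}"

definition res :: "(('n::finite) pol \<Rightarrow> 'n pol) \<Rightarrow> ('n pol \<Rightarrow> 'n pol)" where
  "res T = restrict T Dsp"

definition zbar :: "('n::finite \<Rightarrow> nat) \<Rightarrow> 'n pol" where
  "zbar \<alpha> = (\<lambda>m. if m = ((\<lambda>i. 0), \<alpha>) then 1 else 0)"

definition Send :: "(('n::finite) pol \<Rightarrow> 'n pol) set" where
  "Send = {s. s \<in> extensional Dsp \<and> (\<forall>f\<in>Dsp. s f \<in> Dsp) \<and>
      (\<forall>f\<in>Dsp. \<forall>g\<in>Dsp. s (\<lambda>m. f m + g m) = (\<lambda>m. s f m + s g m)) \<and>
      (\<forall>c. \<forall>f\<in>Dsp. s (\<lambda>m. c * f m) = (\<lambda>m. c * s f m)) \<and>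
      finite {\<alpha>. s (zbar \<alpha>) \<noteq> (\<lambda>m. 0)}}"

text \<open>rho_{alpha beta}: the linear map on D with rho(beta!^(-1/2) zbar^beta) = alpha!^(-1/2) zbar^alpha
  and rho(zbar^gamma) = 0 for gamma /= beta.\<close>
definition rho :: "('n::finite \<Rightarrow> nat) \<Rightarrow> ('n \<Rightarrow> nat) \<Rightarrow> 'n pol \<Rightarrow> 'n pol" where
  "rho \<alpha> \<beta> = restrict (\<lambda>f m. f ((\<lambda>i. 0), \<beta>) *
      complex_of_real (sqrt (mfact \<beta>) / sqrt (mfact \<alpha>)) * zbar \<alpha> m) Dsp"

end

theory Submission
  imports Defs "HOL-Probability.Distributions"
begin

lemma lborel_prod_integral:
  fixes f :: "'a::euclidean_space \<Rightarrow> real \<Rightarrow> complex"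
  assumes int: "\<And>b. b \<in> Basis \<Longrightarrow> integrable lborel (f b)"
  shows "integrable lborel (\<lambda>x::'a. \<Prod>b\<in>Basis. f b (x \<bullet> b))"
    and "integral\<^sup>L lborel (\<lambda>x::'a. \<Prod>b\<in>Basis. f b (x \<bullet> b)) = (\<Prod>b\<in>Basis. integral\<^sup>L lborel (f b))"
proof -
  interpret product_sigma_finite "\<lambda>_::'a. lborel :: real measure"
    by (simp add: product_sigma_finite_def sigma_finite_lborel)
  let ?S = "\<lambda>g::'a\<Rightarrow>real. \<Sum>b\<in>Basis. g b *\<^sub>R b"
  have Sm: "?S \<in> measurable (\<Pi>\<^sub>M b\<in>Basis. lborel) borel" by measurable
  have fm: "\<And>b. b \<in> Basis \<Longrightarrow> f b \<in> borel_measurable lborel" using int by auto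
  have gm: "(\<lambda>x::'a. \<Prod>b\<in>Basis. f b (x \<bullet> b)) \<in> borel_measurable borel"
    apply (rule borel_measurable_prod)
    apply (rule measurable_compose[where f="\<lambda>x. x \<bullet> _" and N=borel])
    using fm by auto
  have eq: "\<And>g. g \<in> space (\<Pi>\<^sub>M b\<in>Basis. lborel) \<Longrightarrow>
      (\<Prod>b\<in>Basis. f b (?S g \<bullet> b)) = (\<Prod>b\<in>Basis. f b (g b))"
    by (intro prod.cong refl) (simp add: inner_sum_left_Basis)
  have pi: "integrable (\<Pi>\<^sub>M b\<in>Basis. lborel) (\<lambda>g. \<Prod>b\<in>Basis. f b (g b))"
    by (rule product_integrable_prod) (auto intro: int)
  have pi2: "integrable (\<Pi>\<^sub>M b\<in>Basis. lborel) (\<lambda>g. \<Prod>b\<in>Basis. f b (?S g \<bullet> b))"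
    by (rule Bochner_Integration.integrable_cong[THEN iffD2, OF refl _ pi]) (rule eq)
  show "integrable lborel (\<lambda>x::'a. \<Prod>b\<in>Basis. f b (x \<bullet> b))"
    apply (subst lborel_eq)
    apply (subst integrable_distr_eq[OF Sm gm])
    by (rule pi2)
  have "integral\<^sup>L lborel (\<lambda>x::'a. \<Prod>b\<in>Basis. f b (x \<bullet> b))
      = integral\<^sup>L (\<Pi>\<^sub>M b\<in>Basis. lborel) (\<lambda>g. \<Prod>b\<in>Basis. f b (?S g \<bullet> b))"
    apply (subst lborel_eq)
    by (rule integral_distr[OF Sm gm])
  also have "\<dots> = integral\<^sup>L (\<Pi>\<^sub>M b\<in>Basis. lborel) (\<lambda>g. \<Prod>b\<in>Basis. f b (g b))"
    by (rule Bochner_Integration.integral_cong[OF refl eq])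
  also have "\<dots> = (\<Prod>b\<in>Basis. integral\<^sup>L lborel (f b))"
    by (rule product_integral_prod) (auto intro: int)
  finally show "integral\<^sup>L lborel (\<lambda>x::'a. \<Prod>b\<in>Basis. f b (x \<bullet> b)) = (\<Prod>b\<in>Basis. integral\<^sup>L lborel (f b))" .
qed

definition G :: "nat \<Rightarrow> real" where
  "G m = integral\<^sup>L lborel (\<lambda>t::real. exp (- t\<^sup>2) * t ^ m)"

lemma G_even_hb: "has_bochner_integral lborel (\<lambda>t::real. exp (- t\<^sup>2) * t ^ (2*k))
     (sqrt pi * (fact (2 * k) / (2 ^ (2 * k) * fact k)))"
proof -
  have "has_bochner_integral lborel (\<lambda>t::real. exp (- t\<^sup>2) * t ^ (2*k))
     (2 *\<^sub>R ((sqrt pi / 2) * (fact (2 * k) / (2 ^ (2 * k) * fact k))))"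
    by (rule has_bochner_integral_even_function[OF gaussian_moment_even_pos]) simp
  then show ?thesis by simp
qed

lemma G_odd_hb: "has_bochner_integral lborel (\<lambda>t::real. exp (- t\<^sup>2) * t ^ (2*k+1)) 0"
  by (rule has_bochner_integral_odd_function[OF gaussian_moment_odd_pos]) simp

lemma G_int: "integrable lborel (\<lambda>t::real. exp (- t\<^sup>2) * t ^ m)"
proof (cases "even m")
  case True then obtain k where "m = 2*k" by (auto elim: evenE)
  then show ?thesis using integrable.intros[OF G_even_hb[of k]] by simp
next
  case False then obtain k where "m = 2*k+1" by (auto elim: oddE)
  then show ?thesis using integrable.intros[OF G_odd_hb[of k]] by simp
qed

lemma G_even: "G (2*k) = sqrt pi * (fact (2 * k) / (2 ^ (2 * k) * fact k))"
  unfolding G_def using G_even_hb[of k] by (rule has_bochner_integral_integral_eq)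

lemma G_odd: "G (2*k+1) = 0"
  unfolding G_def using G_odd_hb[of k] by (rule has_bochner_integral_integral_eq)

lemma G0: "G 0 = sqrt pi"
  using G_even[of 0] by simp

lemma G_rec: "real m * G (m - 1) = 2 * G (m + 1)"
proof (cases "even m")
  case True then obtain k where k: "m = 2*k" by (auto elim: evenE)
  show ?thesis
  proof (cases k)
    case 0 then show ?thesis using k G_odd[of 0] by simp
  next
    case (Suc j)
    then have "m - 1 = 2*j+1" "m + 1 = 2*k+1" using k by auto
    then show ?thesis using G_odd[of j] G_odd[of k] by simp
  qed
next
  case False then obtain k where k: "m = 2*k+1" by (auto elim: oddE)
  then have e: "m - 1 = 2*k" "m + 1 = 2*(k+1)" by auto
  have f1: "fact (2 * (k+1)) = 2*(real k+1)*(2*real k+1) * (fact (2*k) :: real)"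
    by (simp add: algebra_simps)
  have f2: "fact (k+1) = (real k+1) * (fact k :: real)" by simp
  have p: "(2::real) ^ (2 * (k+1)) = 4 * 2 ^ (2*k)" by (simp add: power_add)
  have nz: "(fact k :: real) \<noteq> 0" "(2::real) ^ (2*k) \<noteq> 0" "real k + 1 \<noteq> 0" by auto
  show ?thesis
  proof -
    define F where "F = (fact (2*k) :: real)"
    define P where "P = (2::real) ^ (2*k)"
    define K where "K = (fact k :: real)"
    have "F \<noteq> 0" "P \<noteq> 0" "K \<noteq> 0" "real k + 1 \<noteq> 0" unfolding F_def P_def K_def by auto
    then have "real (2*k+1) * (sqrt pi * (F / (P * K))) =
      2 * (sqrt pi * (2 * (real k + 1) * (2 * real k + 1) * F / (4 * P * ((real k + 1) * K))))"
      by (simp add: divide_simps; algebra)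
    moreover have "G (m - 1) = sqrt pi * (F / (P * K))" unfolding e(1) G_even F_def P_def K_def ..
    moreover have "G (m + 1) = sqrt pi * (2 * (real k + 1) * (2 * real k + 1) * F / (4 * P * ((real k + 1) * K)))"
      unfolding e(2) G_even F_def P_def K_def f2 p f1 ..
    ultimately show ?thesis using k by simp
  qed

qed

definition Eg :: "'a::euclidean_space \<Rightarrow> complex" where
  "Eg z = complex_of_real (exp (- (norm z)\<^sup>2))"

definition mono :: "('a::euclidean_space \<Rightarrow> nat) \<Rightarrow> 'a \<Rightarrow> complex" where
  "mono e z = (\<Prod>b\<in>Basis. complex_of_real (z \<bullet> b) ^ e b)"

definition Lint :: "('a::euclidean_space \<Rightarrow> complex) \<Rightarrow> complex" where
  "Lint F = integral\<^sup>L lborel (\<lambda>z. Eg z * F z)"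

definition Lintb :: "('a::euclidean_space \<Rightarrow> complex) \<Rightarrow> bool" where
  "Lintb F \<longleftrightarrow> integrable lborel (\<lambda>z. Eg z * F z)"

lemma Eg_mono: "Eg z * mono e z = (\<Prod>b\<in>Basis. complex_of_real (exp (- (z \<bullet> b)\<^sup>2) * (z \<bullet> b) ^ e b))"
proof -
  have "(norm z)\<^sup>2 = (\<Sum>b\<in>Basis. (z \<bullet> b)\<^sup>2)"
    unfolding power2_norm_eq_inner by (subst euclidean_inner) (simp add: power2_eq_square)
  then have "exp (- (norm z)\<^sup>2) = (\<Prod>b\<in>Basis. exp (- (z \<bullet> b)\<^sup>2))"
    by (simp add: exp_sum sum_negf[symmetric])
  then show ?thesis
    by (simp add: Eg_def mono_def prod.distrib)
qed

lemma mono_int: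
  "Lintb (mono e :: 'a::euclidean_space \<Rightarrow> complex) \<and>
   Lint (mono e :: 'a \<Rightarrow> complex) = (\<Prod>b\<in>Basis. complex_of_real (G (e b)))"
proof -
  have int: "\<And>b. integrable lborel (\<lambda>t. complex_of_real (exp (- t\<^sup>2) * t ^ e b))"
    using G_int by (simp only: complex_of_real_integrable_eq)
  show ?thesis
    unfolding Lintb_def Lint_def Eg_mono
    using lborel_prod_integral[of "\<lambda>b t. complex_of_real (exp (- t\<^sup>2) * t ^ e b)", OF int]
    by (simp only: G_def integral_complex_of_real)
qed

definition rep_by :: "('a::euclidean_space \<Rightarrow> complex) \<Rightarrow> nat set \<Rightarrow> (nat \<Rightarrow> complex) \<Rightarrow> (nat \<Rightarrow> 'a \<Rightarrow> nat) \<Rightarrow> bool" where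
  "rep_by F I d g \<longleftrightarrow> finite I \<and> (\<forall>z. F z = (\<Sum>i\<in>I. d i * mono (g i) z))"

definition rep :: "('a::euclidean_space \<Rightarrow> complex) \<Rightarrow> bool" where
  "rep F \<longleftrightarrow> (\<exists>I d g. rep_by F I d g)"

lemma rep_by_int:
  assumes "rep_by F I d g"
  shows "Lintb F \<and> Lint F = (\<Sum>i\<in>I. d i * (\<Prod>b\<in>Basis. complex_of_real (G (g i b))))"
proof -
  have fin: "finite I" and F: "\<And>z. F z = (\<Sum>i\<in>I. d i * mono (g i) z)" using assms by (auto simp: rep_by_def)
  have eq: "(\<lambda>z. Eg z * F z) = (\<lambda>z. \<Sum>i\<in>I. d i * (Eg z * mono (g i) z))"
    by (simp add: F sum_distrib_left mult.left_commute)
  have i: "\<And>i. integrable lborel (\<lambda>z. d i * (Eg z * mono (g i) z))"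
    using mono_int unfolding Lintb_def by (intro integrable_mult_right) auto
  have m: "\<And>e. integral\<^sup>L lborel (\<lambda>z. Eg z * mono e z) = (\<Prod>b\<in>Basis. complex_of_real (G (e b)))"
    using mono_int unfolding Lint_def by blast
  show ?thesis unfolding Lintb_def Lint_def eq
    using i fin by (simp add: m)
qed

lemma rep_int: "rep F \<Longrightarrow> Lintb F"
  using rep_by_int unfolding rep_def by blast

lemma rep_const: "rep (\<lambda>z::'a::euclidean_space. c)"
  unfolding rep_def rep_by_def
  by (rule exI[of _ "{0}"], rule exI[of _ "\<lambda>_. c"], rule exI[of _ "\<lambda>_ _. 0"]) (simp add: mono_def)

lemma rep_coord: "b \<in> Basis \<Longrightarrow> rep (\<lambda>z::'a::euclidean_space. complex_of_real (z \<bullet> b))"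
  unfolding rep_def rep_by_def
proof (rule exI[of _ "{0}"], rule exI[of _ "\<lambda>_. 1"], rule exI[of _ "\<lambda>_ b'. if b' = b then 1 else 0"])
  assume b: "b \<in> Basis"
  have "\<And>z::'a. mono (\<lambda>b'. if b' = b then 1 else 0) z = complex_of_real (z \<bullet> b)"
    unfolding mono_def using b
    by (simp add: if_distrib[of "\<lambda>k. _ ^ k"] prod.delta cong: if_cong)
  then show "finite {0::nat} \<and> (\<forall>z::'a. complex_of_real (z \<bullet> b) = (\<Sum>i\<in>{0}. 1 * mono (\<lambda>b'. if b' = b then 1 else 0) z))"
    by simp
qed

lemma rep_add: "rep F \<Longrightarrow> rep H \<Longrightarrow> rep (\<lambda>z::'a::euclidean_space. F z + H z)"
proof -
  assume "rep F" "rep H"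
  then obtain I1 d1 g1 I2 d2 g2 where 1: "rep_by F I1 d1 g1" and 2: "rep_by H I2 d2 g2"
    unfolding rep_def by blast
  let ?J = "(\<lambda>i. 2*i) ` I1 \<union> (\<lambda>i. 2*i+1) ` I2"
  let ?d = "\<lambda>n::nat. if even n then d1 (n div 2) else d2 (n div 2)"
  let ?g = "\<lambda>n::nat. if even n then g1 (n div 2) else g2 (n div 2)"
  have disj: "(\<lambda>i. 2*i) ` I1 \<inter> (\<lambda>i. 2*i+1) ` I2 = {}" by auto presburger
  have inj1: "inj_on (\<lambda>i::nat. 2*i) I1" and inj2: "inj_on (\<lambda>i::nat. 2*i+1) I2" by (auto simp: inj_on_def)
  have f1: "finite I1" and f2: "finite I2" using 1 2 by (auto simp: rep_by_def)
  have "\<And>z. F z + H z = (\<Sum>n\<in>?J. ?d n * mono (?g n) z)"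
  proof -
    fix z
    have "(\<Sum>n\<in>?J. ?d n * mono (?g n) z) = (\<Sum>n\<in>(\<lambda>i. 2*i) ` I1. ?d n * mono (?g n) z)
        + (\<Sum>n\<in>(\<lambda>i. 2*i+1) ` I2. ?d n * mono (?g n) z)"
      by (rule sum.union_disjoint) (use f1 f2 disj in auto)
    also have "\<dots> = (\<Sum>i\<in>I1. d1 i * mono (g1 i) z) + (\<Sum>i\<in>I2. d2 i * mono (g2 i) z)"
      unfolding sum.reindex[OF inj1] sum.reindex[OF inj2] by simp
    finally show "F z + H z = (\<Sum>n\<in>?J. ?d n * mono (?g n) z)" using 1 2 by (simp add: rep_by_def)
  qed
  then have "rep_by (\<lambda>z. F z + H z) ?J ?d ?g" using 1 2 by (simp add: rep_by_def)
  then show ?thesis unfolding rep_def by blast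
qed

lemma mono_add: "mono (\<lambda>b. e1 b + e2 b) z = mono e1 z * mono e2 z"
  unfolding mono_def by (simp add: power_add prod.distrib)

lemma rep_mult: "rep F \<Longrightarrow> rep H \<Longrightarrow> rep (\<lambda>z::'a::euclidean_space. F z * H z)"
proof -
  assume "rep F" "rep H"
  then obtain I1 d1 g1 I2 d2 g2 where 1: "rep_by F I1 d1 g1" and 2: "rep_by H I2 d2 g2"
    unfolding rep_def by blast
  let ?J = "prod_encode ` (I1 \<times> I2)"
  let ?d = "\<lambda>n::nat. d1 (fst (prod_decode n)) * d2 (snd (prod_decode n))"
  let ?g = "\<lambda>n::nat. \<lambda>b. g1 (fst (prod_decode n)) b + g2 (snd (prod_decode n)) b"
  have inj: "inj_on prod_encode (I1 \<times> I2)" by (meson inj_on_subset inj_prod_encode subset_UNIV)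
  have "\<And>z. F z * H z = (\<Sum>n\<in>?J. ?d n * mono (?g n) z)"
  proof -
    fix z
    have "F z * H z = (\<Sum>i\<in>I1. \<Sum>j\<in>I2. (d1 i * mono (g1 i) z) * (d2 j * mono (g2 j) z))"
      using 1 2 unfolding rep_by_def by (simp add: sum_product)
    also have "\<dots> = (\<Sum>p\<in>I1 \<times> I2. (d1 (fst p) * mono (g1 (fst p)) z) * (d2 (snd p) * mono (g2 (snd p)) z))"
      by (simp add: sum.cartesian_product case_prod_beta)
    also have "\<dots> = (\<Sum>n\<in>?J. ?d n * mono (?g n) z)"
      by (simp add: sum.reindex[OF inj] mono_add mult_ac)
    finally show "F z * H z = (\<Sum>n\<in>?J. ?d n * mono (?g n) z)" .
  qed
  then have "rep_by (\<lambda>z. F z * H z) ?J ?d ?g" using 1 2 by (simp add: rep_by_def)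
  then show ?thesis unfolding rep_def by blast
qed

lemma rep_pow: "rep F \<Longrightarrow> rep (\<lambda>z::'a::euclidean_space. F z ^ k)"
  by (induction k) (auto intro: rep_mult rep_const)

lemma rep_prod: "finite A \<Longrightarrow> (\<And>j. j \<in> A \<Longrightarrow> rep (f j)) \<Longrightarrow> rep (\<lambda>z::'a::euclidean_space. \<Prod>j\<in>A. f j z)"
  by (induction A rule: finite_induct) (auto intro: rep_mult rep_const)

lemma mono_upd:
  assumes b0: "b0 \<in> (Basis :: 'a::euclidean_space set)"
  shows "mono (e(b0 := k)) (z::'a) = complex_of_real (z \<bullet> b0) ^ k *
           (\<Prod>b\<in>Basis - {b0}. complex_of_real (z \<bullet> b) ^ e b)"
  unfolding mono_def
  by (subst prod.remove[OF finite_Basis b0]) (auto intro!: prod.cong)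

lemma prodG_upd:
  assumes b0: "b0 \<in> (Basis :: 'a::euclidean_space set)"
  shows "(\<Prod>b\<in>Basis. complex_of_real (G ((e(b0 := k)) b))) = complex_of_real (G k) *
           (\<Prod>b\<in>(Basis::'a set) - {b0}. complex_of_real (G (e b)))"
  by (subst prod.remove[OF finite_Basis b0]) (auto intro!: prod.cong)

lemma mono_shift:
  assumes b0: "b0 \<in> (Basis :: 'a::euclidean_space set)"
  shows "mono e (z + t *\<^sub>R b0) = (complex_of_real (z \<bullet> b0) + complex_of_real t) ^ e b0 *
           (\<Prod>b\<in>Basis - {b0}. complex_of_real (z \<bullet> b) ^ e b)"
proof -
  have "mono e (z + t *\<^sub>R b0) = mono (e(b0 := e b0)) (z + t *\<^sub>R b0)" by simp
  also have "\<dots> = complex_of_real ((z + t *\<^sub>R b0) \<bullet> b0) ^ e b0 *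
           (\<Prod>b\<in>Basis - {b0}. complex_of_real ((z + t *\<^sub>R b0) \<bullet> b) ^ e b)"
    by (rule mono_upd[OF b0])
  also have "(\<Prod>b\<in>Basis - {b0}. complex_of_real ((z + t *\<^sub>R b0) \<bullet> b) ^ e b)
      = (\<Prod>b\<in>Basis - {b0}. complex_of_real (z \<bullet> b) ^ e b)"
    using b0 by (intro prod.cong refl) (auto simp: inner_add_left inner_not_same_Basis)
  finally show ?thesis using b0 by (simp add: inner_add_left)
qed

lemma IBP:
  fixes F :: "'a::euclidean_space \<Rightarrow> complex"
  assumes rb: "rep_by F I d g" and b0: "b0 \<in> Basis"
    and D: "\<And>z. ((\<lambda>t. F (z + t *\<^sub>R b0)) has_vector_derivative D z) (at 0)"
  shows "Lintb D \<and> Lint D = 2 * Lint (\<lambda>z. complex_of_real (z \<bullet> b0) * F z)"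
proof -
  have fin: "finite I" and F: "\<And>z. F z = (\<Sum>i\<in>I. d i * mono (g i) z)" using rb by (auto simp: rep_by_def)
  define R where "R e z = (\<Prod>b\<in>Basis - {b0}. complex_of_real (z \<bullet> b) ^ e b)" for e and z :: 'a
  define g' where "g' i = (g i)(b0 := g i b0 - 1)" for i
  define d' where "d' i = d i * of_nat (g i b0)" for i
  define g'' where "g'' i = (g i)(b0 := g i b0 + 1)" for i
  have Dz: "D z = (\<Sum>i\<in>I. d' i * mono (g' i) z)" for z
  proof -
    define ff where "ff X = (\<Sum>i\<in>I. d i * ((complex_of_real (z \<bullet> b0) + X) ^ g i b0 * R (g i) z))" for X
    have "(ff has_field_derivative (\<Sum>i\<in>I. d i * (of_nat (g i b0) * (complex_of_real (z \<bullet> b0) + 0) ^ (g i b0 - 1) * R (g i) z))) (at 0)"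
      unfolding ff_def
      apply (auto intro!: derivative_eq_intros)
      apply (intro sum.cong refl)
      by (simp only: mult_ac)
    then have "((\<lambda>t. ff (of_real t)) has_vector_derivative
        (\<Sum>i\<in>I. d i * (of_nat (g i b0) * (complex_of_real (z \<bullet> b0) + 0) ^ (g i b0 - 1) * R (g i) z))) (at 0)"
      using has_vector_derivative_real_field[of ff _ 0] by simp
    moreover have "(\<lambda>t. ff (of_real t)) = (\<lambda>t. F (z + t *\<^sub>R b0))"
      by (simp add: ff_def F mono_shift[OF b0] R_def)
    ultimately have "((\<lambda>t. F (z + t *\<^sub>R b0)) has_vector_derivative
        (\<Sum>i\<in>I. d i * (of_nat (g i b0) * (complex_of_real (z \<bullet> b0) + 0) ^ (g i b0 - 1) * R (g i) z))) (at 0)"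
      by simp
    then have "D z = (\<Sum>i\<in>I. d i * (of_nat (g i b0) * (complex_of_real (z \<bullet> b0) + 0) ^ (g i b0 - 1) * R (g i) z))"
      by (rule vector_derivative_unique_at[OF D[of z]])
    then show ?thesis
      by (simp add: d'_def g'_def mono_upd[OF b0] R_def mult_ac)
  qed
  have rD: "rep_by D I d' g'" using fin by (simp add: rep_by_def Dz)
  have m2: "complex_of_real (z \<bullet> b0) * mono (g i) z = mono (g'' i) z" for z i
  proof -
    have "mono (g i) z = mono ((g i)(b0 := g i b0)) z" by simp
    then show ?thesis unfolding g''_def by (simp only: mono_upd[OF b0]) simp
  qed
  have r2: "rep_by (\<lambda>z. complex_of_real (z \<bullet> b0) * F z) I d g''"
    using fin by (simp add: rep_by_def F sum_distrib_left m2[symmetric] mult_ac)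
  have "Lint D = (\<Sum>i\<in>I. d' i * (\<Prod>b\<in>Basis. complex_of_real (G (g' i b))))"
    using rep_by_int[OF rD] by simp
  also have "\<dots> = (\<Sum>i\<in>I. 2 * (d i * (\<Prod>b\<in>Basis. complex_of_real (G (g'' i b)))))"
  proof (rule sum.cong[OF refl])
    fix i
    have "complex_of_real (real (g i b0) * G (g i b0 - 1)) = complex_of_real (2 * G (g i b0 + 1))"
      by (simp only: G_rec)
    then have "of_nat (g i b0) * complex_of_real (G (g i b0 - 1)) = 2 * complex_of_real (G (g i b0 + 1))"
      by simp
    then show "d' i * (\<Prod>b\<in>Basis. complex_of_real (G (g' i b))) = 2 * (d i * (\<Prod>b\<in>Basis. complex_of_real (G (g'' i b))))"
      unfolding g'_def g''_def d'_def prodG_upd[OF b0]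
      by (simp only: mult.assoc[symmetric]) (simp only: mult.assoc mult.left_commute[of "d i"])
  qed
  also have "\<dots> = 2 * Lint (\<lambda>z. complex_of_real (z \<bullet> b0) * F z)"
    using rep_by_int[OF r2] by (simp add: sum_distrib_left)
  finally show ?thesis using rep_by_int[OF rD] by simp
qed

lemma Lint_add: "Lintb F \<Longrightarrow> Lintb H \<Longrightarrow> Lint (\<lambda>z. F z + H z) = Lint F + Lint H"
  unfolding Lint_def Lintb_def by (simp add: distrib_left)

lemma Lintb_add: "Lintb F \<Longrightarrow> Lintb H \<Longrightarrow> Lintb (\<lambda>z. F z + H z)"
  unfolding Lintb_def by (simp add: distrib_left)

lemma Lint_cmult: "Lint (\<lambda>z. k * F z) = k * Lint F"
  unfolding Lint_def by (simp add: mult.left_commute)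

lemma Lintb_cmult: "Lintb F \<Longrightarrow> Lintb (\<lambda>z. k * F z)"
  unfolding Lintb_def by (simp add: mult.left_commute)

definition Mon :: "('n::finite \<Rightarrow> nat) \<Rightarrow> ('n \<Rightarrow> nat) \<Rightarrow> complex ^ 'n \<Rightarrow> complex" where
  "Mon a c z = (\<Prod>i\<in>UNIV. (z $ i) ^ (a i) * cnj (z $ i) ^ (c i))"

definition K :: "('n::finite \<Rightarrow> nat) \<Rightarrow> ('n \<Rightarrow> nat) \<Rightarrow> complex" where
  "K a c = Lint (Mon a c)"

definition Rst :: "'n::finite \<Rightarrow> ('n \<Rightarrow> nat) \<Rightarrow> ('n \<Rightarrow> nat) \<Rightarrow> complex ^ 'n \<Rightarrow> complex" where
  "Rst i a c z = (\<Prod>j\<in>UNIV - {i}. (z $ j) ^ (a j) * cnj (z $ j) ^ (c j))"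

lemma Mon_split: "Mon a c z = (z $ i) ^ (a i) * cnj (z $ i) ^ (c i) * Rst i a c z"
  unfolding Mon_def Rst_def by (rule prod.remove) auto

lemma Rst_upd: "Rst i (a(i := p)) (c(i := q)) = Rst i a c"
  unfolding Rst_def by (intro ext prod.cong) auto

lemma Mon_upd: "Mon (a(i := p)) (c(i := q)) z = (z $ i) ^ p * cnj (z $ i) ^ q * Rst i a c z"
  using Mon_split[of "a(i := p)" "c(i := q)" z i] by (simp add: Rst_upd)

lemma coord_re: "z \<bullet> axis i (1::complex) = Re (z $ i)" by (simp add: inner_axis)
lemma coord_im: "z \<bullet> axis i \<i> = Im (z $ i)" by (simp add: inner_axis)

lemma axis_Basis1: "axis i (1::complex) \<in> (Basis :: (complex^'n::finite) set)"
  unfolding Basis_vec_def using complex_Basis_1 by blast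
lemma axis_Basis2: "axis i \<i> \<in> (Basis :: (complex^'n::finite) set)"
  unfolding Basis_vec_def using complex_Basis_i by blast

lemma coord_eq: "z $ i = complex_of_real (z \<bullet> axis i 1) + \<i> * complex_of_real (z \<bullet> axis i \<i>)"
  by (simp add: coord_re coord_im complex_eq_iff)

lemma coord_cnj: "cnj (z $ i) = complex_of_real (z \<bullet> axis i 1) - \<i> * complex_of_real (z \<bullet> axis i \<i>)"
  by (simp add: coord_re coord_im complex_eq_iff)

lemma rep_coordz: "rep (\<lambda>z::complex^'n::finite. z $ i)"
proof -
  have "rep (\<lambda>z::complex^'n. complex_of_real (z \<bullet> axis i 1) + \<i> * complex_of_real (z \<bullet> axis i \<i>))"
    by (intro rep_add rep_mult rep_const rep_coord axis_Basis1 axis_Basis2)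
  then show ?thesis by (simp only: coord_eq[symmetric])
qed

lemma rep_coordc: "rep (\<lambda>z::complex^'n::finite. cnj (z $ i))"
proof -
  have "rep (\<lambda>z::complex^'n. complex_of_real (z \<bullet> axis i 1) + (- \<i>) * complex_of_real (z \<bullet> axis i \<i>))"
    by (intro rep_add rep_mult rep_const rep_coord axis_Basis1 axis_Basis2)
  then show ?thesis by (simp only: coord_cnj) simp
qed

lemma rep_Mon: "rep (Mon a c)"
proof -
  have "rep (\<lambda>z::complex^'a. \<Prod>i\<in>UNIV. (z $ i) ^ (a i) * cnj (z $ i) ^ (c i))"
    by (intro rep_prod rep_mult rep_pow rep_coordz rep_coordc) auto
  then show ?thesis unfolding Mon_def by (simp add: fun_eq_iff)
qed

lemma Mon_shift:
  "Mon a c (z + t *\<^sub>R axis i u) =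
     (z $ i + of_real t * u) ^ (a i) * (cnj (z $ i) + of_real t * cnj u) ^ (c i) * Rst i a c z"
proof -
  have "Mon a c (z + t *\<^sub>R axis i u) = ((z + t *\<^sub>R axis i u) $ i) ^ (a i) * cnj ((z + t *\<^sub>R axis i u) $ i) ^ (c i)
      * Rst i a c (z + t *\<^sub>R axis i u)" by (rule Mon_split)
  also have "Rst i a c (z + t *\<^sub>R axis i u) = Rst i a c z"
    unfolding Rst_def by (intro prod.cong refl) (auto simp: axis_def)
  moreover have "(z + t *\<^sub>R axis i u) $ i = z $ i + t *\<^sub>R u" by (simp add: axis_def)
  moreover have "t *\<^sub>R u = of_real t * u" by (simp add: scaleR_conv_of_real)
  ultimately show ?thesis by simp
qed

lemma Mon_deriv:
  "((\<lambda>t. Mon a c (z + t *\<^sub>R axis i u)) has_vector_derivative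
     ((of_nat (a i) * (z $ i) ^ (a i - 1) * u * cnj (z $ i) ^ (c i) +
       (z $ i) ^ (a i) * (of_nat (c i) * cnj (z $ i) ^ (c i - 1) * cnj u)) * Rst i a c z)) (at 0)"
proof -
  define ff where "ff X = (z $ i + X * u) ^ (a i) * (cnj (z $ i) + X * cnj u) ^ (c i) * Rst i a c z" for X
  have "(ff has_field_derivative
     ((of_nat (a i) * (z $ i + 0 * u) ^ (a i - 1) * u * (cnj (z $ i) + 0 * cnj u) ^ (c i) +
       (z $ i + 0 * u) ^ (a i) * (of_nat (c i) * (cnj (z $ i) + 0 * cnj u) ^ (c i - 1) * cnj u)) * Rst i a c z)) (at 0)"
    unfolding ff_def
    apply (rule derivative_eq_intros refl)+
    by (simp add: algebra_simps)
  then have "((\<lambda>t. ff (of_real t)) has_vector_derivative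
     ((of_nat (a i) * (z $ i) ^ (a i - 1) * u * cnj (z $ i) ^ (c i) +
       (z $ i) ^ (a i) * (of_nat (c i) * cnj (z $ i) ^ (c i - 1) * cnj u)) * Rst i a c z)) (at 0)"
    using has_vector_derivative_real_field[of ff _ 0] by simp
  moreover have "(\<lambda>t. ff (of_real t)) = (\<lambda>t. Mon a c (z + t *\<^sub>R axis i u))"
    by (simp add: ff_def Mon_shift)
  ultimately show ?thesis by simp
qed

lemma K_rec_gen:
  fixes a c :: "'n::finite \<Rightarrow> nat" and s :: complex
  shows "2 * Lint (\<lambda>z. (complex_of_real (z \<bullet> axis i 1) + s * \<i> * complex_of_real (z \<bullet> axis i \<i>)) * Mon a c z)
    = Lint (\<lambda>z. (of_nat (a i) * (z $ i) ^ (a i - 1) * cnj (z $ i) ^ (c i) * (1 + s * \<i> * \<i>) +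
       (z $ i) ^ (a i) * (of_nat (c i) * cnj (z $ i) ^ (c i - 1)) * (1 + s * \<i> * cnj \<i>)) * Rst i a c z)"
proof -
  obtain I d g where rb: "rep_by (Mon a c) I d g" using rep_Mon unfolding rep_def by blast
  define D where "D u z = (of_nat (a i) * (z $ i) ^ (a i - 1) * u * cnj (z $ i) ^ (c i) +
       (z $ i) ^ (a i) * (of_nat (c i) * cnj (z $ i) ^ (c i - 1) * cnj u)) * Rst i a c z" for u and z :: "complex^'n"
  have 1: "Lintb (D 1) \<and> Lint (D 1) = 2 * Lint (\<lambda>z. complex_of_real (z \<bullet> axis i 1) * Mon a c z)"
    by (rule IBP[OF rb axis_Basis1]) (unfold D_def, rule Mon_deriv)
  have 2: "Lintb (D \<i>) \<and> Lint (D \<i>) = 2 * Lint (\<lambda>z. complex_of_real (z \<bullet> axis i \<i>) * Mon a c z)"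
    by (rule IBP[OF rb axis_Basis2]) (unfold D_def, rule Mon_deriv)
  have r1: "Lintb (\<lambda>z. complex_of_real (z \<bullet> axis i 1) * Mon a c z)"
    by (intro rep_int rep_mult rep_coord rep_Mon axis_Basis1)
  have r2: "Lintb (\<lambda>z. (s * \<i>) * (complex_of_real (z \<bullet> axis i \<i>) * Mon a c z))"
    by (intro Lintb_cmult rep_int rep_mult rep_coord rep_Mon axis_Basis2)
  have "2 * Lint (\<lambda>z. (complex_of_real (z \<bullet> axis i 1) + s * \<i> * complex_of_real (z \<bullet> axis i \<i>)) * Mon a c z)
      = 2 * Lint (\<lambda>z. complex_of_real (z \<bullet> axis i 1) * Mon a c z + (s * \<i>) * (complex_of_real (z \<bullet> axis i \<i>) * Mon a c z))"
    by (simp add: algebra_simps)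
  also have "\<dots> = 2 * (Lint (\<lambda>z. complex_of_real (z \<bullet> axis i 1) * Mon a c z) + (s * \<i>) * Lint (\<lambda>z. complex_of_real (z \<bullet> axis i \<i>) * Mon a c z))"
    by (simp only: Lint_add[OF r1 r2] Lint_cmult)
  also have "\<dots> = Lint (D 1) + (s * \<i>) * Lint (D \<i>)"
    using 1 2 by (simp add: algebra_simps)
  also have "\<dots> = Lint (\<lambda>z. D 1 z + (s * \<i>) * D \<i> z)"
    using 1 2 by (simp add: Lint_add Lintb_cmult Lint_cmult)
  also have "(\<lambda>z. D 1 z + (s * \<i>) * D \<i> z) = (\<lambda>z. (of_nat (a i) * (z $ i) ^ (a i - 1) * cnj (z $ i) ^ (c i) * (1 + s * \<i> * \<i>) +
       (z $ i) ^ (a i) * (of_nat (c i) * cnj (z $ i) ^ (c i - 1)) * (1 + s * \<i> * cnj \<i>)) * Rst i a c z)"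
    unfolding D_def by (simp add: algebra_simps)
  finally show ?thesis .
qed

lemma Mon_updc: "Mon a (c(i := q)) z = (z $ i) ^ (a i) * cnj (z $ i) ^ q * Rst i a c z"
  using Mon_upd[of a i "a i" c q z] by simp

lemma Mon_upda: "Mon (a(i := p)) c z = (z $ i) ^ p * cnj (z $ i) ^ (c i) * Rst i a c z"
  using Mon_upd[of a i p c "c i" z] by simp

lemma Mon_mult_coord: "z $ i * Mon a c z = Mon (a(i := a i + 1)) c z"
  using Mon_upd[of a i "a i + 1" c "c i" z] Mon_split[of a c z i] by simp

lemma Mon_mult_cnj: "cnj (z $ i) * Mon a c z = Mon a (c(i := c i + 1)) z"
  using Mon_upd[of a i "a i" c "c i + 1" z] Mon_split[of a c z i] by simp

lemma K_rec1: "K (a(i := a i + 1)) c = of_nat (c i) * K a (c(i := c i - 1))"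
proof -
  have "2 * K (a(i := a i + 1)) c = 2 * Lint (\<lambda>z. (complex_of_real (z \<bullet> axis i 1) + 1 * \<i> * complex_of_real (z \<bullet> axis i \<i>)) * Mon a c z)"
    unfolding K_def by (simp add: coord_eq[symmetric] Mon_mult_coord)
  also have "\<dots> = Lint (\<lambda>z. 2 * of_nat (c i) * Mon a (c(i := c i - 1)) z)"
    unfolding K_rec_gen[where s=1] by (rule arg_cong[where f=Lint]) (simp add: Mon_updc fun_eq_iff algebra_simps)
  finally show ?thesis unfolding K_def Lint_cmult by (simp add: mult.assoc)
qed

lemma K_rec2: "K a (c(i := c i + 1)) = of_nat (a i) * K (a(i := a i - 1)) c"
proof -
  have "2 * K a (c(i := c i + 1)) = 2 * Lint (\<lambda>z. (complex_of_real (z \<bullet> axis i 1) + (-1) * \<i> * complex_of_real (z \<bullet> axis i \<i>)) * Mon a c z)"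
    unfolding K_def by (simp add: coord_cnj[symmetric] Mon_mult_cnj)
  also have "\<dots> = Lint (\<lambda>z. 2 * of_nat (a i) * Mon (a(i := a i - 1)) c z)"
    unfolding K_rec_gen[where s="-1"] by (rule arg_cong[where f=Lint]) (simp add: Mon_upda fun_eq_iff algebra_simps)
  finally show ?thesis unfolding K_def Lint_cmult by (simp add: mult.assoc)
qed

lemma sum_upd_less:
  fixes f :: "'n::finite \<Rightarrow> nat"
  assumes "f i > 0"
  shows "sum (f(i := f i - 1)) UNIV < sum f UNIV"
proof -
  have "sum (f(i := f i - 1)) UNIV = (f i - 1) + sum (f(i := f i - 1)) (UNIV - {i})"
    by (subst sum.remove[of UNIV i]) auto
  also have "sum (f(i := f i - 1)) (UNIV - {i}) = sum f (UNIV - {i})"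
    by (intro sum.cong) auto
  also have "sum f UNIV = f i + sum f (UNIV - {i})" by (subst sum.remove[of UNIV i]) auto
  ultimately show ?thesis using assms by simp
qed

lemma K00: "K ((\<lambda>_. 0) :: 'n::finite \<Rightarrow> nat) (\<lambda>_. 0) \<noteq> (0::complex)"
proof -
  have "rep_by (Mon (\<lambda>_. 0) (\<lambda>_. 0) :: complex^'n \<Rightarrow> complex) {0} (\<lambda>_. 1) (\<lambda>_ _. 0)"
    by (simp add: rep_by_def Mon_def mono_def)
  from rep_by_int[OF this]  have "K ((\<lambda>_. 0) :: 'n \<Rightarrow> nat) (\<lambda>_. 0) = (\<Prod>b\<in>(Basis :: (complex^'n) set). complex_of_real (G 0))"
    by (simp add: K_def)
  also have "\<dots> \<noteq> 0" by (simp add: G0)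
  finally show ?thesis .
qed

lemma K_diag: "K a a \<noteq> 0"
proof (induction "sum a UNIV" arbitrary: a rule: less_induct)
  case less
  show ?case
  proof (cases "a = (\<lambda>_. 0)")
    case True then show ?thesis using K00 by simp
  next
    case False
    then obtain i where i: "a i > 0" by auto
    define a' where "a' = a(i := a i - 1)"
    have aa: "a = a'(i := a' i + 1)" using i unfolding a'_def by auto
    have "K a a = K (a'(i := a' i + 1)) a" using aa by simp
    also have "\<dots> = of_nat (a i) * K a' a'" unfolding K_rec1 a'_def ..
    finally have "K a a = of_nat (a i) * K a' a'" .
    moreover have "K a' a' \<noteq> 0" using less sum_upd_less[of a i, OF i] unfolding a'_def by blast
    ultimately show ?thesis using i by simp
  qed
qed

lemma K_off: "a \<noteq> c \<Longrightarrow> K a c = 0"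
proof (induction "sum a UNIV + sum c UNIV" arbitrary: a c rule: less_induct)
  case less
  from less.prems obtain i where ne: "a i \<noteq> c i" by (auto simp: fun_eq_iff)
  define a' where "a' = a(i := a i - 1)"
  define c' where "c' = c(i := c i - 1)"
  show ?case
  proof (cases "a i > c i")
    case True
    have aa: "a = a'(i := a' i + 1)" using True unfolding a'_def by auto
    have "K a c = K (a'(i := a' i + 1)) c" using aa by simp
    also have "\<dots> = of_nat (c i) * K a' c'" unfolding K_rec1 a'_def c'_def by simp
    finally have eq: "K a c = of_nat (c i) * K a' c'" .
    show ?thesis
    proof (cases "c i = 0")
      case True then show ?thesis using eq by simp
    next
      case False
      have "a' \<noteq> c'"
      proof
        assume "a' = c'"
        then have "a' i = c' i" by simp
        then show False using False True unfolding a'_def c'_def by simp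
      qed
      moreover have "sum a' UNIV + sum c' UNIV < sum a UNIV + sum c UNIV"
        using sum_upd_less[of a i] sum_upd_less[of c i] True False unfolding a'_def c'_def by simp
      ultimately have "K a' c' = 0" using less by blast
      then show ?thesis using eq by simp
    qed
  next
    case False
    then have lt: "c i > a i" using ne by simp
    have cc: "c = c'(i := c' i + 1)" using lt unfolding c'_def by auto
    have "K a c = K a (c'(i := c' i + 1))" using cc by simp
    also have "\<dots> = of_nat (a i) * K a' c'" unfolding K_rec2 a'_def c'_def by simp
    finally have eq: "K a c = of_nat (a i) * K a' c'" .
    show ?thesis
    proof (cases "a i = 0")
      case True then show ?thesis using eq by simp
    next
      case False
      have "a' \<noteq> c'"
      proof
        assume "a' = c'"
        then have "a' i = c' i" by simp
        then show False using False lt unfolding a'_def c'_def by simp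
      qed
      moreover have "sum a' UNIV + sum c' UNIV < sum a UNIV + sum c UNIV"
        using sum_upd_less[of a i] sum_upd_less[of c i] lt False unfolding a'_def c'_def by simp
      ultimately have "K a' c' = 0" using less by blast
      then show ?thesis using eq by simp
    qed
  qed
qed

lemma Lint_sum: "finite S \<Longrightarrow> (\<And>s. s \<in> S \<Longrightarrow> Lintb (F s)) \<Longrightarrow>
    Lintb (\<lambda>z. \<Sum>s\<in>S. F s z) \<and> Lint (\<lambda>z. \<Sum>s\<in>S. F s z) = (\<Sum>s\<in>S. Lint (F s))"
  unfolding Lint_def Lintb_def by (simp add: sum_distrib_left)

lemma Lintb_Mon_c: "Lintb (\<lambda>z. k * Mon a c z)"
  by (intro Lintb_cmult rep_int rep_Mon)

lemma cnj_Mon: "cnj (Mon a c z) = Mon c a z"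
  unfolding Mon_def by (simp add: cnj_prod mult.commute)

lemma Mon_mult: "Mon a c z * Mon a' c' z = Mon (\<lambda>i. a i + a' i) (\<lambda>i. c i + c' i) z"
  unfolding Mon_def by (simp add: prod.distrib[symmetric] power_add mult_ac)

lemma peval_sup:
  assumes "finite S" "{m. f m \<noteq> 0} \<subseteq> S"
  shows "peval f z = (\<Sum>m\<in>S. f m * Mon (fst m) (snd m) z)"
  unfolding peval_def Mon_def
  by (rule sum.mono_neutral_left) (use assms in auto)

definition C0 :: "'n::finite itself \<Rightarrow> complex" where
  "C0 _ = complex_of_real ((2::real) ^ CARD('n) / (2 * pi) ^ CARD('n))"

lemma C0_nz: "C0 (TYPE('n::finite)) \<noteq> 0"
  unfolding C0_def by simp

lemma pinner_expand:
  fixes f g :: "('n::finite) pol"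
  assumes S: "finite S" "{m. f m \<noteq> 0} \<subseteq> S" and S': "finite S'" "{m. g m \<noteq> 0} \<subseteq> S'"
  shows "pinner f g = C0 TYPE('n) * (\<Sum>m\<in>S. \<Sum>m'\<in>S'. f m * cnj (g m') *
           K (\<lambda>i. fst m i + snd m' i) (\<lambda>i. snd m i + fst m' i))"
proof -
  have eq: "complex_of_real (exp (- (norm z)\<^sup>2)) * peval f z * cnj (peval g z) =
     Eg z * (\<Sum>m\<in>S. \<Sum>m'\<in>S'. f m * cnj (g m') * Mon (\<lambda>i. fst m i + snd m' i) (\<lambda>i. snd m i + fst m' i) z)"
    for z :: "complex^'n"
  proof -
    have "peval f z * cnj (peval g z) = (\<Sum>m\<in>S. f m * Mon (fst m) (snd m) z) * (\<Sum>m'\<in>S'. cnj (g m') * Mon (snd m') (fst m') z)"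
      by (simp add: peval_sup[OF S] peval_sup[OF S'] cnj_sum cnj_Mon)
    also have "\<dots> = (\<Sum>m\<in>S. \<Sum>m'\<in>S'. f m * cnj (g m') * Mon (\<lambda>i. fst m i + snd m' i) (\<lambda>i. snd m i + fst m' i) z)"
      by (simp add: sum_product Mon_mult[symmetric] mult_ac)
    finally show ?thesis by (simp add: Eg_def mult.assoc)
  qed
  have "integral\<^sup>L lborel (\<lambda>z::complex^'n. complex_of_real (exp (- (norm z)\<^sup>2)) * peval f z * cnj (peval g z))
     = Lint (\<lambda>z. \<Sum>m\<in>S. \<Sum>m'\<in>S'. f m * cnj (g m') * Mon (\<lambda>i. fst m i + snd m' i) (\<lambda>i. snd m i + fst m' i) z)"
    unfolding Lint_def eq ..
  also have "\<dots> = (\<Sum>m\<in>S. \<Sum>m'\<in>S'. Lint (\<lambda>z. f m * cnj (g m') * Mon (\<lambda>i. fst m i + snd m' i) (\<lambda>i. snd m i + fst m' i) z))"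
  proof -
    have inner: "\<And>m. Lintb (\<lambda>z. \<Sum>m'\<in>S'. f m * cnj (g m') * Mon (\<lambda>i. fst m i + snd m' i) (\<lambda>i. snd m i + fst m' i) z) \<and>
        Lint (\<lambda>z. \<Sum>m'\<in>S'. f m * cnj (g m') * Mon (\<lambda>i. fst m i + snd m' i) (\<lambda>i. snd m i + fst m' i) z)
        = (\<Sum>m'\<in>S'. Lint (\<lambda>z. f m * cnj (g m') * Mon (\<lambda>i. fst m i + snd m' i) (\<lambda>i. snd m i + fst m' i) z))"
      by (rule Lint_sum[OF S'(1)]) (rule Lintb_Mon_c)
    show ?thesis
      using Lint_sum[OF S(1), of "\<lambda>m z. \<Sum>m'\<in>S'. f m * cnj (g m') * Mon (\<lambda>i. fst m i + snd m' i) (\<lambda>i. snd m i + fst m' i) z"] inner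
      by simp
  qed
  also have "\<dots> = (\<Sum>m\<in>S. \<Sum>m'\<in>S'. f m * cnj (g m') * K (\<lambda>i. fst m i + snd m' i) (\<lambda>i. snd m i + fst m' i))"
    by (simp add: Lint_cmult K_def)
  finally show ?thesis unfolding pinner_def C0_def by simp
qed

definition cst :: "complex \<Rightarrow> ('n::finite) pol" where
  "cst v = (\<lambda>m. if m = ((\<lambda>i. 0), (\<lambda>i. 0)) then v else 0)"

lemma cst_Hol: "cst v \<in> Hol"
proof -
  have "{m. cst v m \<noteq> 0} \<subseteq> {((\<lambda>i. 0), (\<lambda>i. 0))}" by (auto simp: cst_def split: if_splits)
  then have "finite {m. cst v m \<noteq> 0}" by (rule finite_subset) simp
  then show ?thesis by (auto simp: Hol_def Pspace_def cst_def split: if_splits)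
qed

lemma Dsp_fst: "f \<in> Dsp \<Longrightarrow> f m \<noteq> 0 \<Longrightarrow> fst m = (\<lambda>i. 0)"
  by (cases m) (auto simp: Dsp_def)
lemma Hol_snd: "f \<in> Hol \<Longrightarrow> f m \<noteq> 0 \<Longrightarrow> snd m = (\<lambda>i. 0)"
  by (cases m) (auto simp: Hol_def)
lemma Dsp_fin: "f \<in> Dsp \<Longrightarrow> finite {m. f m \<noteq> 0}"
  by (auto simp: Dsp_def Pspace_def)
lemma Hol_fin: "f \<in> Hol \<Longrightarrow> finite {m. f m \<noteq> 0}"
  by (auto simp: Hol_def Pspace_def)

lemma rho00t_Dsp:
  fixes f :: "('n::finite) pol"
  assumes f: "f \<in> Dsp"
  shows "rho00t f = cst (f ((\<lambda>i. 0), (\<lambda>i. 0)))"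
  unfolding rho00t_def
proof (rule the_equality)
  define z0 where "z0 = (\<lambda>i::'n. 0::nat)"
  define v where "v = f (z0, z0)"
  show "cst (f ((\<lambda>i. 0), (\<lambda>i. 0))) \<in> Hol \<and>
    (\<forall>g\<in>Hol. pinner (\<lambda>m. f m - cst (f ((\<lambda>i. 0), (\<lambda>i. 0))) m) g = 0)"
  proof (intro conjI ballI cst_Hol)
    fix g :: "'n pol" assume g: "g \<in> Hol"
    let ?F = "\<lambda>m. f m - cst (f ((\<lambda>i. 0), (\<lambda>i. 0))) m"
    have sub: "{m. ?F m \<noteq> 0} \<subseteq> {m. f m \<noteq> 0}" by (auto simp: cst_def split: if_splits)
    have "pinner ?F g = C0 TYPE('n) * (\<Sum>m\<in>{m. f m \<noteq> 0}. \<Sum>m'\<in>{m. g m \<noteq> 0}. ?F m * cnj (g m') *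
           K (\<lambda>i. fst m i + snd m' i) (\<lambda>i. snd m i + fst m' i))"
      by (rule pinner_expand[OF Dsp_fin[OF f] sub Hol_fin[OF g]]) simp
    also have "\<dots> = C0 TYPE('n) * 0"
    proof (intro arg_cong[where f="\<lambda>x. C0 TYPE('n) * x"] sum.neutral ballI)
      fix m m' assume m: "m \<in> {m. f m \<noteq> 0}" and m': "m' \<in> {m. g m \<noteq> 0}"
      show "?F m * cnj (g m') * K (\<lambda>i. fst m i + snd m' i) (\<lambda>i. snd m i + fst m' i) = 0"
      proof (cases "?F m = 0")
        case False
        then have ne: "m \<noteq> ((\<lambda>i. 0), (\<lambda>i. 0))" by (auto simp: cst_def)
        have fm: "fst m = (\<lambda>i. 0)" using Dsp_fst[OF f] m by auto
        have sm': "snd m' = (\<lambda>i. 0)" using Hol_snd[OF g] m' by auto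
        from ne fm have "snd m \<noteq> (\<lambda>i. 0)" by (cases m) auto
        then obtain i where "snd m i \<noteq> 0" by auto
        then have "(\<lambda>i. fst m i + snd m' i) \<noteq> (\<lambda>i. snd m i + fst m' i)"
          using fm sm' by (auto simp: fun_eq_iff)
        then show ?thesis by (simp add: K_off)
      qed simp
    qed
    finally show "pinner ?F g = 0" by simp
  qed
next
  fix h :: "'n pol"
  assume h: "h \<in> Hol \<and> (\<forall>g\<in>Hol. pinner (\<lambda>m. f m - h m) g = 0)"
  then have hH: "h \<in> Hol" and orth: "\<And>g. g \<in> Hol \<Longrightarrow> pinner (\<lambda>m. f m - h m) g = 0" by auto
  define z0 where "z0 = (\<lambda>i::'n. 0::nat)"
  have key: "h (\<gamma>, z0) = f (\<gamma>, z0)" for \<gamma>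
  proof -
    define g where "g = (\<lambda>m. if m = (\<gamma>, z0) then (1::complex) else 0)"
    have gsup: "{m. g m \<noteq> 0} = {(\<gamma>, z0)}" by (auto simp: g_def)
    have gH: "g \<in> Hol" by (auto simp: Hol_def Pspace_def gsup z0_def) (auto simp: g_def z0_def split: if_splits)
    define S where "S = {m. f m \<noteq> 0} \<union> {m. h m \<noteq> 0}"
    have finS: "finite S" unfolding S_def using Dsp_fin[OF f] Hol_fin[OF hH] by simp
    define X where "X m = (f m - h m) * K (fst m) (\<lambda>i. snd m i + \<gamma> i)" for m
    have "pinner (\<lambda>m. f m - h m) g = C0 TYPE('n) * (\<Sum>m\<in>S. \<Sum>m'\<in>{(\<gamma>, z0)}. (f m - h m) * cnj (g m') *
           K (\<lambda>i. fst m i + snd m' i) (\<lambda>i. snd m i + fst m' i))"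
      by (rule pinner_expand[OF finS _ _ ]) (auto simp: S_def gsup)
    also have "\<dots> = C0 TYPE('n) * (\<Sum>m\<in>S. X m)"
      by (simp add: X_def g_def z0_def)
    also have "(\<Sum>m\<in>S. X m) = (\<Sum>m\<in>S. if m = (\<gamma>, z0) then X m else 0)"
    proof (rule sum.cong[OF refl])
      fix m assume "m \<in> S"
      show "X m = (if m = (\<gamma>, z0) then X m else 0)"
      proof (cases "m = (\<gamma>, z0) \<or> f m - h m = 0")
        case True then show ?thesis by (auto simp: X_def)
      next
        case False
        then have mne: "m \<noteq> (\<gamma>, z0)" and fh: "f m - h m \<noteq> 0" by auto
        have "fst m \<noteq> (\<lambda>i. snd m i + \<gamma> i)"
        proof (cases "snd m = z0")
          case True
          then have "fst m \<noteq> \<gamma>" using mne by (cases m) auto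
          then show ?thesis using True by (simp add: z0_def)
        next
          case False
          then have "h m = 0" using Hol_snd[OF hH, of m] by (auto simp: z0_def)
          then have "f m \<noteq> 0" using fh by simp
          then have "fst m = z0" using Dsp_fst[OF f] by (simp add: z0_def)
          moreover from False obtain i where "snd m i \<noteq> 0" by (auto simp: z0_def)
          ultimately show ?thesis by (auto simp: fun_eq_iff z0_def)
        qed
        then show ?thesis using mne by (simp add: X_def K_off)
      qed
    qed
    also have "\<dots> = (if (\<gamma>, z0) \<in> S then X (\<gamma>, z0) else 0)"
      using finS by simp
    also have "\<dots> = X (\<gamma>, z0)" by (auto simp: X_def S_def)
    finally have "C0 TYPE('n) * X (\<gamma>, z0) = 0" using orth[OF gH] by simp
    then have "X (\<gamma>, z0) = 0" using C0_nz[where 'n='n] by simp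
    then show ?thesis using K_diag[of \<gamma>] by (simp add: X_def z0_def)
  qed
  show "h = cst (f ((\<lambda>i. 0), (\<lambda>i. 0)))"
  proof (rule ext)
    fix m :: "'n mexp"
    obtain a b where m: "m = (a, b)" by (cases m)
    show "h m = cst (f ((\<lambda>i. 0), (\<lambda>i. 0))) m"
    proof (cases "b = z0")
      case True
      then have "h m = f (a, z0)" using key m by simp
      then show ?thesis using Dsp_fst[OF f, of "(a, z0)"] True m by (auto simp: cst_def z0_def)
    next
      case False
      then have "h m = 0" using Hol_snd[OF hH, of m] m by (auto simp: z0_def)
      then show ?thesis using False m by (auto simp: cst_def z0_def)
    qed
  qed
qed



lemma dbar_pow: "(dbar i ^^ k) H (a, b) = of_nat (pochhammer (b i + 1) k) * H (a, b(i := b i + k))"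
proof (induction k arbitrary: b)
  case 0 then show ?case by simp
next
  case (Suc k)
  have "(dbar i ^^ Suc k) H (a, b) = of_nat (b i + 1) * (dbar i ^^ k) H (a, b(i := b i + 1))"
    by (simp add: dbar_def)
  also have "\<dots> = of_nat (b i + 1) * (of_nat (pochhammer (b i + 1 + 1) k) * H (a, b(i := b i + 1 + k)))"
    unfolding Suc[of "b(i := b i + 1)"] fun_upd_same fun_upd_upd ..
  also have "\<dots> = of_nat (pochhammer (b i + 1) (Suc k)) * H (a, b(i := b i + Suc k))"
    by (simp add: pochhammer_rec ring_distribs)
  finally show ?case .
qed

lemma dbar_foldr:
  "distinct xs \<Longrightarrow> foldr (\<lambda>i g. (dbar i ^^ \<beta> i) \<circ> g) xs id H (a, b) =
     of_nat (\<Prod>i\<in>set xs. pochhammer (b i + 1) (\<beta> i)) * H (a, \<lambda>j. if j \<in> set xs then b j + \<beta> j else b j)"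
proof (induction xs arbitrary: b)
  case Nil then show ?case by simp
next
  case (Cons x xs)
  then have x: "x \<notin> set xs" and d: "distinct xs" by auto
  have "foldr (\<lambda>i g. (dbar i ^^ \<beta> i) \<circ> g) (x # xs) id H (a, b) =
     (dbar x ^^ \<beta> x) (foldr (\<lambda>i g. (dbar i ^^ \<beta> i) \<circ> g) xs id H) (a, b)" by simp
  also have "\<dots> = of_nat (pochhammer (b x + 1) (\<beta> x)) *
      (of_nat (\<Prod>i\<in>set xs. pochhammer ((b(x := b x + \<beta> x)) i + 1) (\<beta> i)) *
       H (a, \<lambda>j. if j \<in> set xs then (b(x := b x + \<beta> x)) j + \<beta> j else (b(x := b x + \<beta> x)) j))"
    by (simp add: dbar_pow Cons.IH[OF d])
  also have "(\<Prod>i\<in>set xs. pochhammer ((b(x := b x + \<beta> x)) i + 1) (\<beta> i)) = (\<Prod>i\<in>set xs. pochhammer (b i + 1) (\<beta> i))"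
    using x by (intro prod.cong) auto
  also have "(\<lambda>j. if j \<in> set xs then (b(x := b x + \<beta> x)) j + \<beta> j else (b(x := b x + \<beta> x)) j)
      = (\<lambda>j. if j \<in> set (x # xs) then b j + \<beta> j else b j)"
    using x by auto
  finally show ?case using x by (simp add: mult.assoc)
qed

lemma mulzbar_pow: "(mulzbar i ^^ k) H (a, b) = (if k \<le> b i then H (a, b(i := b i - k)) else 0)"
proof (induction k arbitrary: b)
  case 0 then show ?case by simp
next
  case (Suc k)
  have "(mulzbar i ^^ Suc k) H (a, b) = (if b i = 0 then 0 else (mulzbar i ^^ k) H (a, b(i := b i - 1)))"
    by (simp add: mulzbar_def)
  also have "\<dots> = (if b i = 0 then 0 else (if k \<le> b i - 1 then H (a, b(i := b i - 1 - k)) else 0))"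
    unfolding Suc[of "b(i := b i - 1)"] fun_upd_same fun_upd_upd ..
  also have "\<dots> = (if Suc k \<le> b i then H (a, b(i := b i - Suc k)) else 0)"
    by (cases "b i") simp_all
  finally show ?case .
qed

lemma mulzbar_foldr:
  "distinct xs \<Longrightarrow> foldr (\<lambda>i g. (mulzbar i ^^ \<alpha> i) \<circ> g) xs id H (a, b) =
     (if \<forall>i\<in>set xs. \<alpha> i \<le> b i then H (a, \<lambda>j. if j \<in> set xs then b j - \<alpha> j else b j) else 0)"
proof (induction xs arbitrary: b)
  case Nil then show ?case by simp
next
  case (Cons x xs)
  then have x: "x \<notin> set xs" and d: "distinct xs" by auto
  have "foldr (\<lambda>i g. (mulzbar i ^^ \<alpha> i) \<circ> g) (x # xs) id H (a, b) =
     (mulzbar x ^^ \<alpha> x) (foldr (\<lambda>i g. (mulzbar i ^^ \<alpha> i) \<circ> g) xs id H) (a, b)" by simp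
  also have "\<dots> = (if \<alpha> x \<le> b x then
      (if \<forall>i\<in>set xs. \<alpha> i \<le> (b(x := b x - \<alpha> x)) i
       then H (a, \<lambda>j. if j \<in> set xs then (b(x := b x - \<alpha> x)) j - \<alpha> j else (b(x := b x - \<alpha> x)) j) else 0) else 0)"
    by (simp add: mulzbar_pow Cons.IH[OF d])
  also have "\<dots> = (if \<forall>i\<in>set (x # xs). \<alpha> i \<le> b i then H (a, \<lambda>j. if j \<in> set (x # xs) then b j - \<alpha> j else b j) else 0)"
  proof -
    have "(\<forall>i\<in>set xs. \<alpha> i \<le> (b(x := b x - \<alpha> x)) i) = (\<forall>i\<in>set xs. \<alpha> i \<le> b i)" using x by auto
    moreover have "(\<lambda>j. if j \<in> set xs then (b(x := b x - \<alpha> x)) j - \<alpha> j else (b(x := b x - \<alpha> x)) j)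
       = (\<lambda>j. if j \<in> set (x # xs) then b j - \<alpha> j else b j)" using x by auto
    ultimately show ?thesis by auto
  qed
  finally show ?case .
qed

definition Zf :: "('n::finite) pol \<Rightarrow> bool" where
  "Zf h \<longleftrightarrow> (\<forall>m. h m \<noteq> 0 \<longrightarrow> fst m = (\<lambda>i. 0))"

lemma Zf_mulzbar: "Zf h \<Longrightarrow> Zf (mulzbar i h)"
  unfolding Zf_def
proof (intro allI impI)
  fix m :: "'a mexp"
  assume h: "\<forall>m. h m \<noteq> 0 \<longrightarrow> fst m = (\<lambda>i. 0)" and ne: "mulzbar i h m \<noteq> 0"
  obtain a b where m: "m = (a, b)" by (cases m)
  from ne have "h (a, b(i := b i - 1)) \<noteq> 0" unfolding m mulzbar_def by (simp split: if_splits)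
  then show "fst m = (\<lambda>i. 0)" using h m by force
qed

lemma Zf_astar: "Zf h \<Longrightarrow> astar i h = mulzbar i h"
proof -
  assume h: "Zf h"
  have "dz i h m = 0" for m
  proof -
    obtain a b where m: "m = (a, b)" by (cases m)
    have "(a(i := a i + 1)) \<noteq> (\<lambda>i. 0)" by (auto simp: fun_eq_iff)
    then have "h (a(i := a i + 1), b) = 0" using h unfolding Zf_def by force
    then show ?thesis by (simp add: dz_def m)
  qed
  then show ?thesis by (simp add: astar_def)
qed

lemma Zf_pow: "Zf h \<Longrightarrow> (astar i ^^ k) h = (mulzbar i ^^ k) h \<and> Zf ((mulzbar i ^^ k) h)"
  by (induction k) (auto simp: Zf_astar Zf_mulzbar)

lemma Zf_foldr: "Zf h \<Longrightarrow> foldr (\<lambda>i g. (astar i ^^ \<alpha> i) \<circ> g) xs id h = foldr (\<lambda>i g. (mulzbar i ^^ \<alpha> i) \<circ> g) xs id h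
   \<and> Zf (foldr (\<lambda>i g. (mulzbar i ^^ \<alpha> i) \<circ> g) xs id h)"
proof (induction xs)
  case Nil then show ?case by simp
next
  case (Cons x xs)
  let ?A = "foldr (\<lambda>i g. (astar i ^^ \<alpha> i) \<circ> g) xs id h"
  let ?M = "foldr (\<lambda>i g. (mulzbar i ^^ \<alpha> i) \<circ> g) xs id h"
  have IH: "?A = ?M" "Zf ?M" using Cons.IH[OF Cons.prems] by blast+
  have "foldr (\<lambda>i g. (astar i ^^ \<alpha> i) \<circ> g) (x # xs) id h = (astar x ^^ \<alpha> x) ?A"
    by (simp only: foldr.simps comp_apply)
  also have "\<dots> = (mulzbar x ^^ \<alpha> x) ?M" using Zf_pow[OF IH(2)] IH(1) by simp
  finally have e1: "foldr (\<lambda>i g. (astar i ^^ \<alpha> i) \<circ> g) (x # xs) id h = (mulzbar x ^^ \<alpha> x) ?M" .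
  have e2: "foldr (\<lambda>i g. (mulzbar i ^^ \<alpha> i) \<circ> g) (x # xs) id h = (mulzbar x ^^ \<alpha> x) ?M"
    by (simp only: foldr.simps comp_apply)
  show ?case unfolding e1 e2 using Zf_pow[OF IH(2)] by blast
qed

definition XS :: "('n::finite) list" where
  "XS = (SOME xs. distinct xs \<and> set xs = UNIV)"

lemma XS: "distinct (XS :: ('n::finite) list) \<and> set (XS :: 'n list) = UNIV"
proof -
  have "\<exists>xs::'n list. distinct xs \<and> set xs = UNIV"
    using finite_distinct_list[of "UNIV :: 'n set"] by auto
  then show ?thesis unfolding XS_def by (rule someI_ex)
qed

lemma opow_XS: "opow A \<alpha> = foldr (\<lambda>i g. (A i ^^ \<alpha> i) \<circ> g) XS id"
  unfolding opow_def XS_def ..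

lemma opow_dbar: fixes H :: "('n::finite) pol" shows "opow dbar \<beta> H (a, b) = of_nat (\<Prod>i\<in>UNIV. pochhammer (b i + 1) (\<beta> i)) * H (a, \<lambda>j. b j + \<beta> j)"
proof -
  have d: "distinct (XS :: 'n list)" and s: "set (XS :: 'n list) = UNIV" using XS by auto
  show ?thesis unfolding opow_XS dbar_foldr[OF d] s by simp
qed

lemma opow_astar_Zf: fixes h :: "('n::finite) pol" shows "Zf h \<Longrightarrow> opow astar \<alpha> h (a, b) = (if \<forall>i. \<alpha> i \<le> b i then h (a, \<lambda>j. b j - \<alpha> j) else 0)"
proof -
  assume h: "Zf h"
  have d: "distinct (XS :: 'n list)" and s: "set (XS :: 'n list) = UNIV" using XS by auto
  show ?thesis unfolding opow_XS conjunct1[OF Zf_foldr[OF h]] mulzbar_foldr[OF d] s by simp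
qed

lemma Zf_cst: "Zf (cst v)"
  unfolding Zf_def cst_def by auto

lemma opow_astar_cst: fixes \<alpha> :: "'n::finite \<Rightarrow> nat" shows "opow astar \<alpha> (cst v) = (\<lambda>m. if m = ((\<lambda>i. 0), \<alpha>) then v else 0)"
proof (rule ext)
  fix m :: "'n mexp"
  obtain a b where m: "m = (a, b)" by (cases m)
  have "(\<forall>i. \<alpha> i \<le> b i) \<and> (\<lambda>j. b j - \<alpha> j) = (\<lambda>i. 0) \<longleftrightarrow> b = \<alpha>"
  proof
    assume H: "(\<forall>i. \<alpha> i \<le> b i) \<and> (\<lambda>j. b j - \<alpha> j) = (\<lambda>i. 0)"
    show "b = \<alpha>"
    proof (rule ext)
      fix j
      have "\<alpha> j \<le> b j" using H by blast
      moreover have "b j - \<alpha> j = 0" using fun_cong[OF conjunct2[OF H], of j] by simp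
      ultimately show "b j = \<alpha> j" by simp
    qed
  qed simp
  note iff = this
  show "opow astar \<alpha> (cst v) m = (if m = ((\<lambda>i. 0), \<alpha>) then v else 0)"
  proof (cases "b = \<alpha>")
    case True then show ?thesis unfolding m opow_astar_Zf[OF Zf_cst] by (simp add: cst_def)
  next
    case False
    then have nb: "\<not> ((\<forall>i. \<alpha> i \<le> b i) \<and> (\<lambda>j. b j - \<alpha> j) = (\<lambda>i. 0))" using iff by blast
    have "cst v (a, \<lambda>j. b j - \<alpha> j) = 0" if "\<forall>i. \<alpha> i \<le> b i"
      using nb that unfolding cst_def by simp
    then show ?thesis unfolding m opow_astar_Zf[OF Zf_cst] using False by simp
  qed
qed

lemma opow_dbar_Dsp:
  fixes f :: "('n::finite) pol"
  assumes f: "f \<in> Dsp"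
  shows "opow dbar \<beta> f \<in> Dsp"
proof -
  let ?g = "opow dbar \<beta> f"
  have sub: "{m. ?g m \<noteq> 0} \<subseteq> (\<lambda>(a, b'). (a, \<lambda>j. b' j - \<beta> j)) ` {m. f m \<noteq> 0}"
  proof
    fix m assume "m \<in> {m. ?g m \<noteq> 0}"
    moreover obtain a b where m: "m = (a, b)" by (cases m)
    ultimately have "f (a, \<lambda>j. b j + \<beta> j) \<noteq> 0" by (simp add: opow_dbar)
    moreover have "m = (\<lambda>(a, b'). (a, \<lambda>j. b' j - \<beta> j)) (a, \<lambda>j. b j + \<beta> j)" using m by simp
    ultimately show "m \<in> (\<lambda>(a, b'). (a, \<lambda>j. b' j - \<beta> j)) ` {m. f m \<noteq> 0}" by blast
  qed
  have fin: "finite {m. ?g m \<noteq> 0}"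
    by (rule finite_subset[OF sub]) (use Dsp_fin[OF f] in simp)
  have "fst m = (\<lambda>i. 0)" if "?g m \<noteq> 0" for m
  proof -
    obtain a b where m: "m = (a, b)" by (cases m)
    then have "f (a, \<lambda>j. b j + \<beta> j) \<noteq> 0" using that by (simp add: opow_dbar)
    then show ?thesis using Dsp_fst[OF f] m by fastforce
  qed
  then show ?thesis using fin by (auto simp: Dsp_def Pspace_def)
qed

definition kap :: "('n::finite \<Rightarrow> nat) \<Rightarrow> ('n \<Rightarrow> nat) \<Rightarrow> complex" where
  "kap \<alpha> \<beta> = complex_of_real (sqrt (mfact \<beta>) / sqrt (mfact \<alpha>))"

lemma mfact_pos: "mfact \<alpha> > 0"
  unfolding mfact_def by (rule prod_pos) auto

lemma kap_nz: "kap \<alpha> \<beta> \<noteq> 0"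
  using mfact_pos[of \<alpha>] mfact_pos[of \<beta>] unfolding kap_def by simp

lemma rhot_Dsp:
  fixes f :: "('n::finite) pol"
  assumes f: "f \<in> Dsp"
  shows "rhot \<alpha> \<beta> f = (\<lambda>m. if m = ((\<lambda>i. 0), \<alpha>) then kap \<alpha> \<beta> * f ((\<lambda>i. 0), \<beta>) else 0)"
proof -
  have g0: "opow dbar \<beta> f ((\<lambda>i. 0), (\<lambda>i. 0)) = complex_of_real (mfact \<beta>) * f ((\<lambda>i. 0), \<beta>)"
  proof -
    have "(\<Prod>i\<in>UNIV. pochhammer (0 + 1) (\<beta> i)) = (\<Prod>i\<in>UNIV. fact (\<beta> i) :: nat)"
      by (simp add: pochhammer_fact)
    then have "complex_of_nat (\<Prod>i\<in>UNIV. pochhammer (0 + 1) (\<beta> i)) = complex_of_real (mfact \<beta>)"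
      unfolding mfact_def by (simp add: of_nat_prod)
    then show ?thesis by (simp add: opow_dbar)
  qed
  have A: "mfact \<alpha> > 0" and B: "mfact \<beta> > 0" by (rule mfact_pos)+
  have r: "1 / sqrt (mfact \<alpha> * mfact \<beta>) * mfact \<beta> = sqrt (mfact \<beta>) / sqrt (mfact \<alpha>)"
    using A B by (simp add: real_sqrt_mult field_simps)
  have "rhot \<alpha> \<beta> f = (\<lambda>m. complex_of_real (1 / sqrt (mfact \<alpha> * mfact \<beta>)) *
      (if m = ((\<lambda>i. 0), \<alpha>) then complex_of_real (mfact \<beta>) * f ((\<lambda>i. 0), \<beta>) else 0))"
    unfolding rhot_def rho00t_Dsp[OF opow_dbar_Dsp[OF f]] opow_astar_cst g0 ..
  also have "\<dots> = (\<lambda>m. if m = ((\<lambda>i. 0), \<alpha>) then kap \<alpha> \<beta> * f ((\<lambda>i. 0), \<beta>) else 0)"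
  proof (rule ext)
    fix m
    have "complex_of_real (1 / sqrt (mfact \<alpha> * mfact \<beta>)) * complex_of_real (mfact \<beta>) = kap \<alpha> \<beta>"
      unfolding kap_def of_real_mult[symmetric] r ..
    note eq = this
    show "complex_of_real (1 / sqrt (mfact \<alpha> * mfact \<beta>)) *
      (if m = ((\<lambda>i. 0), \<alpha>) then complex_of_real (mfact \<beta>) * f ((\<lambda>i. 0), \<beta>) else 0) =
      (if m = ((\<lambda>i. 0), \<alpha>) then kap \<alpha> \<beta> * f ((\<lambda>i. 0), \<beta>) else 0)"
      by (cases "m = ((\<lambda>i. 0), \<alpha>)") (simp_all only: simp_thms if_True if_False mult.assoc[symmetric] eq mult_zero_right)
  qed
  finally show ?thesis .
qed

lemma Dsp_Pspace: "Dsp \<subseteq> Pspace"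
  unfolding Dsp_def by auto

lemma Dsp_I:
  assumes "finite A" "\<And>m. f m \<noteq> 0 \<Longrightarrow> m \<in> A" "\<And>m. f m \<noteq> 0 \<Longrightarrow> fst m = (\<lambda>i. 0)"
  shows "f \<in> Dsp"
proof -
  have "finite {m. f m \<noteq> 0}" by (rule finite_subset[of _ A]) (use assms in auto)
  then show ?thesis using assms(3) by (auto simp: Dsp_def Pspace_def)
qed

lemma zbar_Dsp: "zbar \<beta> \<in> Dsp"
  by (rule Dsp_I[of "{((\<lambda>i. 0), \<beta>)}"]) (auto simp: zbar_def split: if_splits)

lemma Dsp_sumzbar: "finite J \<Longrightarrow> (\<lambda>m. \<Sum>\<beta>\<in>J. v \<beta> * zbar \<beta> m) \<in> Dsp"
proof (rule Dsp_I[of "(\<lambda>\<beta>. ((\<lambda>i. 0), \<beta>)) ` J"])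
  fix m assume "finite J" "(\<Sum>\<beta>\<in>J. v \<beta> * zbar \<beta> m) \<noteq> 0"
  then obtain \<beta> where "\<beta> \<in> J" "v \<beta> * zbar \<beta> m \<noteq> 0" by (meson sum.not_neutral_contains_not_neutral)
  then have "\<beta> \<in> J" "zbar \<beta> m \<noteq> 0" by auto
  then show "m \<in> (\<lambda>\<beta>. ((\<lambda>i. 0), \<beta>)) ` J" "fst m = (\<lambda>i. 0)" by (auto simp: zbar_def split: if_splits)
qed auto

lemma Dsp_expand:
  fixes f :: "('n::finite) pol"
  assumes f: "f \<in> Dsp"
  shows "f = (\<lambda>m. \<Sum>\<beta>\<in>{\<beta>. f ((\<lambda>i. 0), \<beta>) \<noteq> 0}. f ((\<lambda>i. 0), \<beta>) * zbar \<beta> m)"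
proof (rule ext)
  fix m :: "'n mexp"
  obtain a b where m: "m = (a, b)" by (cases m)
  have fin: "finite {\<beta>. f ((\<lambda>i. 0), \<beta>) \<noteq> 0}"
    using finite_vimageI[OF Dsp_fin[OF f], of "\<lambda>\<beta>. ((\<lambda>i. 0), \<beta>)"] by (simp add: inj_on_def vimage_def)
  have "(\<Sum>\<beta>\<in>{\<beta>. f ((\<lambda>i. 0), \<beta>) \<noteq> 0}. f ((\<lambda>i. 0), \<beta>) * zbar \<beta> m)
      = (\<Sum>\<beta>\<in>{\<beta>. f ((\<lambda>i. 0), \<beta>) \<noteq> 0}. if \<beta> = b then (if a = (\<lambda>i. 0) then f ((\<lambda>i. 0), \<beta>) else 0) else 0)"
    by (intro sum.cong refl) (auto simp: zbar_def m)
  also have "\<dots> = (if b \<in> {\<beta>. f ((\<lambda>i. 0), \<beta>) \<noteq> 0} then (if a = (\<lambda>i. 0) then f ((\<lambda>i. 0), b) else 0) else 0)"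
    using fin by (simp only: sum.delta)
  also have "\<dots> = f m"
    using Dsp_fst[OF f, of m] m by (cases "a = (\<lambda>i. 0)") auto
  finally show "f m = (\<Sum>\<beta>\<in>{\<beta>. f ((\<lambda>i. 0), \<beta>) \<noteq> 0}. f ((\<lambda>i. 0), \<beta>) * zbar \<beta> m)" ..
qed

lemma Send_lin:
  fixes s :: "('n::finite) pol \<Rightarrow> 'n pol"
  assumes s: "s \<in> Send" and J: "finite J"
  shows "s (\<lambda>m. \<Sum>\<beta>\<in>J. v \<beta> * zbar \<beta> m) = (\<lambda>m. \<Sum>\<beta>\<in>J. v \<beta> * s (zbar \<beta>) m)"
  using J
proof (induction J rule: finite_induct)
  case empty
  have "s (\<lambda>m. 0 * zbar (\<lambda>i. 0) m) = (\<lambda>m. 0 * s (zbar (\<lambda>i. 0)) m)"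
    using s zbar_Dsp unfolding Send_def by blast
  then show ?case by simp
next
  case (insert \<beta> J)
  have add: "s (\<lambda>m. f m + g m) = (\<lambda>m. s f m + s g m)" if "f \<in> Dsp" "g \<in> Dsp" for f g
    using s that unfolding Send_def by blast
  have hom: "s (\<lambda>m. c * f m) = (\<lambda>m. c * s f m)" if "f \<in> Dsp" for c f
    using s that unfolding Send_def by blast
  have "s (\<lambda>m. \<Sum>\<beta>\<in>insert \<beta> J. v \<beta> * zbar \<beta> m) = s (\<lambda>m. v \<beta> * zbar \<beta> m + (\<Sum>\<beta>\<in>J. v \<beta> * zbar \<beta> m))"
    using insert by simp
  also have "\<dots> = (\<lambda>m. s (\<lambda>m. v \<beta> * zbar \<beta> m) m + s (\<lambda>m. \<Sum>\<beta>\<in>J. v \<beta> * zbar \<beta> m) m)"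
  proof (rule add)
    show "(\<lambda>m. v \<beta> * zbar \<beta> m) \<in> Dsp" using Dsp_sumzbar[of "{\<beta>}" v] by simp
    show "(\<lambda>m. \<Sum>\<beta>\<in>J. v \<beta> * zbar \<beta> m) \<in> Dsp" by (rule Dsp_sumzbar[OF insert(1)])
  qed
  also have "\<dots> = (\<lambda>m. \<Sum>\<beta>\<in>insert \<beta> J. v \<beta> * s (zbar \<beta>) m)"
    using insert hom[OF zbar_Dsp] by simp
  finally show ?case .
qed

definition Tf :: "((('n::finite) \<Rightarrow> nat) \<times> ('n \<Rightarrow> nat)) set \<Rightarrow> ((('n \<Rightarrow> nat) \<times> ('n \<Rightarrow> nat)) \<Rightarrow> complex)
    \<Rightarrow> 'n pol \<Rightarrow> 'n pol" where
  "Tf F c f = (\<lambda>m. \<Sum>p\<in>F. c p * rhot (fst p) (snd p) f m)"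

lemma Stilde_iff: "T \<in> Stilde \<longleftrightarrow> (\<exists>F c. finite F \<and> T = restrict (Tf F c) Pspace)"
  unfolding Stilde_def Tf_def by blast

lemma res_restrict: fixes g :: "('n::finite) pol \<Rightarrow> 'n pol" shows "res (restrict g Pspace) = restrict g Dsp"
proof -
  have "(Pspace :: 'n pol set) \<inter> Dsp = Dsp" using Dsp_Pspace by blast
  then show ?thesis unfolding res_def by simp
qed

lemma Tf_Dsp: "f \<in> Dsp \<Longrightarrow> Tf F c f =
   (\<lambda>m. \<Sum>p\<in>F. c p * (if m = ((\<lambda>i. 0), fst p) then kap (fst p) (snd p) * f ((\<lambda>i. 0), snd p) else 0))"
  unfolding Tf_def by (simp add: rhot_Dsp)

lemma Tf_in_Dsp: "finite F \<Longrightarrow> f \<in> Dsp \<Longrightarrow> Tf F c f \<in> Dsp"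
proof (rule Dsp_I[of "(\<lambda>p. ((\<lambda>i. 0), fst p)) ` F"])
  fix m assume F: "finite F" and f: "f \<in> Dsp" and ne: "Tf F c f m \<noteq> 0"
  then obtain p where "p \<in> F" "c p * (if m = ((\<lambda>i. 0), fst p) then kap (fst p) (snd p) * f ((\<lambda>i. 0), snd p) else 0) \<noteq> 0"
    unfolding Tf_Dsp[OF f] by (meson sum.not_neutral_contains_not_neutral)
  then have "p \<in> F" "m = ((\<lambda>i. 0), fst p)" by (auto split: if_splits)
  then show "m \<in> (\<lambda>p. ((\<lambda>i. 0), fst p)) ` F" "fst m = (\<lambda>i. 0)" by auto
qed auto

lemma Dsp_lin: "f \<in> Dsp \<Longrightarrow> g \<in> Dsp \<Longrightarrow> (\<lambda>m. a * f m + b * g m) \<in> Dsp"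
proof (rule Dsp_I[of "{m. f m \<noteq> 0} \<union> {m. g m \<noteq> 0}"])
  fix m assume f: "f \<in> Dsp" and g: "g \<in> Dsp" and ne: "a * f m + b * g m \<noteq> 0"
  then have "f m \<noteq> 0 \<or> g m \<noteq> 0" by auto
  then show "m \<in> {m. f m \<noteq> 0} \<union> {m. g m \<noteq> 0}" "fst m = (\<lambda>i. 0)"
    using Dsp_fst[OF f, of m] Dsp_fst[OF g, of m] by auto
qed (auto dest: Dsp_fin)

lemma Tf_lin: "f \<in> Dsp \<Longrightarrow> g \<in> Dsp \<Longrightarrow> Tf F c (\<lambda>m. a * f m + b * g m) = (\<lambda>m. a * Tf F c f m + b * Tf F c g m)"
  unfolding Tf_Dsp[OF Dsp_lin] Tf_Dsp
  by (rule ext) (simp add: sum_distrib_left sum.distrib[symmetric], intro sum.cong refl, simp add: algebra_simps)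

lemma Tf_coef: assumes "finite F" shows "Tf F c (zbar \<beta>) ((\<lambda>i. 0), \<alpha>) = (if (\<alpha>, \<beta>) \<in> F then c (\<alpha>, \<beta>) else 0) * kap \<alpha> \<beta>"
proof -
  have "Tf F c (zbar \<beta>) ((\<lambda>i. 0), \<alpha>) = (\<Sum>p\<in>F. if p = (\<alpha>, \<beta>) then c p * kap \<alpha> \<beta> else 0)"
    unfolding Tf_Dsp[OF zbar_Dsp] by (intro sum.cong refl) (auto simp: zbar_def)
  also have "\<dots> = (if (\<alpha>, \<beta>) \<in> F then c (\<alpha>, \<beta>) else 0) * kap \<alpha> \<beta>"
    using assms by (simp add: sum.delta)
  finally show ?thesis .
qed

lemma Tf_ext: "finite F2 \<Longrightarrow> F \<subseteq> F2 \<Longrightarrow> Tf F c = Tf F2 (\<lambda>p. if p \<in> F then c p else 0)"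
  unfolding Tf_def
  by (intro ext sum.mono_neutral_cong_left) auto

lemma partA: "T \<in> (Stilde :: (('n::finite) pol \<Rightarrow> 'n pol) set) \<Longrightarrow> f \<in> Dsp \<Longrightarrow> T f \<in> Dsp"
proof -
  assume T: "T \<in> Stilde" and f: "f \<in> Dsp"
  then obtain F c where F: "finite F" and Te: "T = restrict (Tf F c) Pspace" unfolding Stilde_iff by blast
  have "T f = Tf F c f" using f Dsp_Pspace Te by auto
  then show ?thesis using Tf_in_Dsp[OF F f] by simp
qed

lemma partD: "res (restrict (rhot \<alpha> \<beta>) Pspace) = (rho \<alpha> \<beta> :: ('n::finite) pol \<Rightarrow> 'n pol)"
  unfolding res_restrict rho_def
proof (rule restrict_ext)
  fix f :: "'n pol" assume f: "f \<in> Dsp"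
  show "rhot \<alpha> \<beta> f = (\<lambda>m. f ((\<lambda>i. 0), \<beta>) * complex_of_real (sqrt (mfact \<beta>) / sqrt (mfact \<alpha>)) * zbar \<alpha> m)"
    unfolding rhot_Dsp[OF f] by (rule ext) (simp add: zbar_def kap_def)
qed

lemma partB: "inj_on res (Stilde :: (('n::finite) pol \<Rightarrow> 'n pol) set)"
proof (rule inj_onI)
  fix T1 T2 :: "'n pol \<Rightarrow> 'n pol"
  assume "T1 \<in> Stilde" "T2 \<in> Stilde" and eq: "res T1 = res T2"
  then obtain F1 c1 F2 c2 where F1: "finite F1" and T1: "T1 = restrict (Tf F1 c1) Pspace"
    and F2: "finite F2" and T2: "T2 = restrict (Tf F2 c2) Pspace" unfolding Stilde_iff by blast
  have eqD: "Tf F1 c1 f = Tf F2 c2 f" if "f \<in> Dsp" for f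
  proof -
    have "restrict (Tf F1 c1) Dsp f = restrict (Tf F2 c2) Dsp f"
      using eq unfolding T1 T2 res_restrict by simp
    then show ?thesis using that by simp
  qed
  define cc1 where "cc1 p = (if p \<in> F1 then c1 p else 0)" for p
  define cc2 where "cc2 p = (if p \<in> F2 then c2 p else 0)" for p
  have cc: "cc1 = cc2"
  proof (rule ext)
    fix p :: "('n \<Rightarrow> nat) \<times> ('n \<Rightarrow> nat)"
    obtain \<alpha> \<beta> where p: "p = (\<alpha>, \<beta>)" by (cases p)
    have "Tf F1 c1 (zbar \<beta>) ((\<lambda>i. 0), \<alpha>) = Tf F2 c2 (zbar \<beta>) ((\<lambda>i. 0), \<alpha>)"
      using eqD[OF zbar_Dsp] by simp
    then have "cc1 p * kap \<alpha> \<beta> = cc2 p * kap \<alpha> \<beta>"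
      unfolding Tf_coef[OF F1] Tf_coef[OF F2] cc1_def cc2_def p .
    then show "cc1 p = cc2 p" using kap_nz[of \<alpha> \<beta>] by simp
  qed
  have "Tf F1 c1 = Tf (F1 \<union> F2) cc1" unfolding cc1_def by (rule Tf_ext) (use F1 F2 in auto)
  also have "\<dots> = Tf (F1 \<union> F2) cc2" by (simp add: cc)
  also have "\<dots> = Tf F2 c2" unfolding cc2_def by (rule Tf_ext[symmetric]) (use F1 F2 in auto)
  finally show "T1 = T2" unfolding T1 T2 by simp
qed

lemma partC1:
  assumes T: "T \<in> (Stilde :: (('n::finite) pol \<Rightarrow> 'n pol) set)"
  shows "res T \<in> Send"
proof -
  obtain F c where F: "finite F" and Te: "T = restrict (Tf F c) Pspace" using T unfolding Stilde_iff by blast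
  have rT: "res T = restrict (Tf F c) Dsp" unfolding Te res_restrict ..
  have fin: "finite {\<gamma>. res T (zbar \<gamma>) \<noteq> (\<lambda>m. 0)}"
  proof (rule finite_subset[of _ "snd ` F"])
    show "{\<gamma>. res T (zbar \<gamma>) \<noteq> (\<lambda>m. 0)} \<subseteq> snd ` F"
    proof
      fix \<gamma> assume "\<gamma> \<in> {\<gamma>. res T (zbar \<gamma>) \<noteq> (\<lambda>m. 0)}"
      then have ne: "Tf F c (zbar \<gamma>) \<noteq> (\<lambda>m. 0)" using zbar_Dsp[of \<gamma>] unfolding rT by simp
      show "\<gamma> \<in> snd ` F"
      proof (rule ccontr)
        assume ng: "\<gamma> \<notin> snd ` F"
        have "Tf F c (zbar \<gamma>) = (\<lambda>m. 0)"
          unfolding Tf_Dsp[OF zbar_Dsp]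
        proof (rule ext, rule sum.neutral, rule ballI)
          fix m p assume "p \<in> F"
          then have "snd p \<noteq> \<gamma>" using ng by force
          then show "c p * (if m = ((\<lambda>i. 0), fst p) then kap (fst p) (snd p) * zbar \<gamma> ((\<lambda>i. 0), snd p) else 0) = 0"
            by (simp add: zbar_def)
        qed
        then show False using ne by simp
      qed
    qed
  qed (use F in simp)
  show ?thesis
    unfolding Send_def
  proof (intro CollectI conjI ballI allI)
    show "res T \<in> extensional Dsp" unfolding rT by simp
    show "res T f \<in> Dsp" if "f \<in> Dsp" for f using that Tf_in_Dsp[OF F that] unfolding rT by simp
    show "res T (\<lambda>m. f m + g m) = (\<lambda>m. res T f m + res T g m)" if "f \<in> Dsp" "g \<in> Dsp" for f g
    proof -
      have "(\<lambda>m. 1 * f m + 1 * g m) \<in> Dsp" by (rule Dsp_lin[OF that])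
      then have d: "(\<lambda>m. f m + g m) \<in> Dsp" by simp
      have "Tf F c (\<lambda>m. 1 * f m + 1 * g m) = (\<lambda>m. 1 * Tf F c f m + 1 * Tf F c g m)" by (rule Tf_lin[OF that])
      then show ?thesis unfolding rT using that d by simp
    qed
    show "res T (\<lambda>m. k * f m) = (\<lambda>m. k * res T f m)" if "f \<in> Dsp" for k f
    proof -
      have "(\<lambda>m. k * f m + 0 * f m) \<in> Dsp" by (rule Dsp_lin[OF that that])
      then have d: "(\<lambda>m. k * f m) \<in> Dsp" by simp
      have "Tf F c (\<lambda>m. k * f m + 0 * f m) = (\<lambda>m. k * Tf F c f m + 0 * Tf F c f m)" by (rule Tf_lin[OF that that])
      then show ?thesis unfolding rT using that d by simp
    qed
    show "finite {\<gamma>. res T (zbar \<gamma>) \<noteq> (\<lambda>m. 0)}" by (rule fin)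
  qed
qed

lemma Dsp_fin2: "g \<in> Dsp \<Longrightarrow> finite {\<alpha>. g ((\<lambda>i. 0), \<alpha>) \<noteq> 0}"
  using finite_vimageI[OF Dsp_fin, of g "\<lambda>\<alpha>. ((\<lambda>i. 0), \<alpha>)"] by (simp add: inj_on_def vimage_def)

lemma partC2:
  fixes s :: "('n::finite) pol \<Rightarrow> 'n pol"
  assumes s: "s \<in> Send"
  shows "s \<in> res ` Stilde"
proof -
  define z0 where "z0 = (\<lambda>i::'n. 0::nat)"
  define B where "B = {\<beta>. s (zbar \<beta>) \<noteq> (\<lambda>m. 0)}"
  have finB: "finite B" using s unfolding B_def Send_def by blast
  have sD: "\<And>f. f \<in> Dsp \<Longrightarrow> s f \<in> Dsp" using s unfolding Send_def by blast
  have sE: "s \<in> extensional Dsp" using s unfolding Send_def by blast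
  define Aall where "Aall = (\<Union>\<beta>\<in>B. {\<alpha>. s (zbar \<beta>) (z0, \<alpha>) \<noteq> 0})"
  have finA: "finite Aall" unfolding Aall_def z0_def using finB Dsp_fin2[OF sD[OF zbar_Dsp]] by blast
  define F where "F = Aall \<times> B"
  define c where "c p = s (zbar (snd p)) (z0, fst p) / kap (fst p) (snd p)" for p
  have finF: "finite F" unfolding F_def using finA finB by simp
  have TS: "restrict (Tf F c) Pspace \<in> Stilde" unfolding Stilde_iff using finF by blast
  have inner: "(\<Sum>\<alpha>\<in>Aall. if m = (z0, \<alpha>) then s (zbar \<beta>) (z0, \<alpha>) else 0) = s (zbar \<beta>) m"
    if \<beta>: "\<beta> \<in> B" for \<beta> m
  proof -
    obtain a b where m: "m = (a, b)" by (cases m)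
    show ?thesis
    proof (cases "a = z0")
      case True
      have "(\<Sum>\<alpha>\<in>Aall. if m = (z0, \<alpha>) then s (zbar \<beta>) (z0, \<alpha>) else 0)
          = (\<Sum>\<alpha>\<in>Aall. if \<alpha> = b then s (zbar \<beta>) (z0, \<alpha>) else 0)"
        by (intro sum.cong refl) (auto simp: m True)
      also have "\<dots> = (if b \<in> Aall then s (zbar \<beta>) (z0, b) else 0)" using finA by (simp add: sum.delta)
      also have "\<dots> = s (zbar \<beta>) m" using \<beta> m True by (auto simp: Aall_def)
      finally show ?thesis .
    next
      case False
      then have "s (zbar \<beta>) m = 0" using Dsp_fst[OF sD[OF zbar_Dsp], of \<beta> m] m by (auto simp: z0_def)
      moreover have "(\<Sum>\<alpha>\<in>Aall. if m = (z0, \<alpha>) then s (zbar \<beta>) (z0, \<alpha>) else 0) = 0"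
        using False m by (intro sum.neutral) auto
      ultimately show ?thesis by simp
    qed
  qed
  have main: "Tf F c f = s f" if f: "f \<in> Dsp" for f
  proof (rule ext)
    fix m
    define Bf where "Bf = {\<beta>. f (z0, \<beta>) \<noteq> 0}"
    have finBf: "finite Bf" unfolding Bf_def z0_def by (rule Dsp_fin2[OF f])
    have "Tf F c f m = (\<Sum>p\<in>Aall \<times> B. if m = (z0, fst p) then s (zbar (snd p)) (z0, fst p) * f (z0, snd p) else 0)"
      unfolding Tf_Dsp[OF f] F_def
      by (intro sum.cong refl) (simp add: c_def kap_nz z0_def)
    also have "\<dots> = (\<Sum>\<alpha>\<in>Aall. \<Sum>\<beta>\<in>B. if m = (z0, \<alpha>) then s (zbar \<beta>) (z0, \<alpha>) * f (z0, \<beta>) else 0)"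
      by (simp add: sum.cartesian_product case_prod_beta)
    also have "\<dots> = (\<Sum>\<beta>\<in>B. \<Sum>\<alpha>\<in>Aall. if m = (z0, \<alpha>) then s (zbar \<beta>) (z0, \<alpha>) * f (z0, \<beta>) else 0)"
      by (rule sum.swap)
    also have "\<dots> = (\<Sum>\<beta>\<in>B. f (z0, \<beta>) * s (zbar \<beta>) m)"
    proof (rule sum.cong[OF refl])
      fix \<beta> assume \<beta>: "\<beta> \<in> B"
      have "(\<Sum>\<alpha>\<in>Aall. if m = (z0, \<alpha>) then s (zbar \<beta>) (z0, \<alpha>) * f (z0, \<beta>) else 0)
          = f (z0, \<beta>) * (\<Sum>\<alpha>\<in>Aall. if m = (z0, \<alpha>) then s (zbar \<beta>) (z0, \<alpha>) else 0)"
        unfolding sum_distrib_left by (intro sum.cong refl) simp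
      then show "(\<Sum>\<alpha>\<in>Aall. if m = (z0, \<alpha>) then s (zbar \<beta>) (z0, \<alpha>) * f (z0, \<beta>) else 0)
          = f (z0, \<beta>) * s (zbar \<beta>) m" using inner[OF \<beta>] by simp
    qed
    also have "\<dots> = (\<Sum>\<beta>\<in>B \<union> Bf. f (z0, \<beta>) * s (zbar \<beta>) m)"
    proof (rule sum.mono_neutral_left)
      show "finite (B \<union> Bf)" using finB finBf by simp
      show "B \<subseteq> B \<union> Bf" by blast
      show "\<forall>\<beta>\<in>B \<union> Bf - B. f (z0, \<beta>) * s (zbar \<beta>) m = 0"
      proof
        fix \<beta> assume "\<beta> \<in> B \<union> Bf - B"
        then have "s (zbar \<beta>) = (\<lambda>m. 0)" unfolding B_def by blast
        then show "f (z0, \<beta>) * s (zbar \<beta>) m = 0" by simp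
      qed
    qed
    also have "\<dots> = (\<Sum>\<beta>\<in>Bf. f (z0, \<beta>) * s (zbar \<beta>) m)"
    proof (rule sum.mono_neutral_left[symmetric])
      show "finite (B \<union> Bf)" using finB finBf by simp
      show "Bf \<subseteq> B \<union> Bf" by blast
      show "\<forall>\<beta>\<in>B \<union> Bf - Bf. f (z0, \<beta>) * s (zbar \<beta>) m = 0"
      proof
        fix \<beta> assume "\<beta> \<in> B \<union> Bf - Bf"
        then have "f (z0, \<beta>) = 0" unfolding Bf_def by blast
        then show "f (z0, \<beta>) * s (zbar \<beta>) m = 0" by simp
      qed
    qed
    also have "\<dots> = s f m"
    proof -
      have "s f = s (\<lambda>m. \<Sum>\<beta>\<in>Bf. f (z0, \<beta>) * zbar \<beta> m)"
        using Dsp_expand[OF f] unfolding Bf_def z0_def by simp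
      also have "\<dots> = (\<lambda>m. \<Sum>\<beta>\<in>Bf. f (z0, \<beta>) * s (zbar \<beta>) m)" by (rule Send_lin[OF s finBf])
      finally show ?thesis by simp
    qed
    finally show "Tf F c f m = s f m" .
  qed
  have "res (restrict (Tf F c) Pspace) = s"
  proof -
    have "res (restrict (Tf F c) Pspace) = restrict (Tf F c) Dsp" by (rule res_restrict)
    also have "\<dots> = restrict s Dsp" by (rule restrict_ext) (rule main)
    also have "\<dots> = s" by (rule extensional_restrict[OF sE])
    finally show ?thesis .
  qed
  then show ?thesis using TS by blast
qed


theorem proposition4p2:
  shows "(\<forall>T\<in>(Stilde :: (('n::finite) pol \<Rightarrow> 'n pol) set). \<forall>f\<in>Dsp. T f \<in> Dsp)
    \<and> inj_on res (Stilde :: (('n::finite) pol \<Rightarrow> 'n pol) set)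
    \<and> res ` (Stilde :: (('n::finite) pol \<Rightarrow> 'n pol) set) = Send
    \<and> (\<forall>\<alpha> \<beta>. res (restrict (rhot \<alpha> \<beta>) Pspace) = (rho \<alpha> \<beta> :: 'n pol \<Rightarrow> 'n pol))"
proof (intro conjI ballI allI)
  show "\<And>T f. T \<in> (Stilde :: ('n pol \<Rightarrow> 'n pol) set) \<Longrightarrow> f \<in> Dsp \<Longrightarrow> T f \<in> Dsp"
    by (rule partA)
  show "inj_on res (Stilde :: ('n pol \<Rightarrow> 'n pol) set)" by (rule partB)
  show "res ` (Stilde :: ('n pol \<Rightarrow> 'n pol) set) = Send"
    using partC1 partC2 by blast
  show "\<And>\<alpha> \<beta>. res (restrict (rhot \<alpha> \<beta>) Pspace) = (rho \<alpha> \<beta> :: 'n pol \<Rightarrow> 'n pol)"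
    by (rule partD)
qed

end
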